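(* Let $0<\beta<1$, let $\Omega\subset\mathbb{C}$ be a bounded doubly-connected domain, and let $f\colon B_1-\overline{B}_\beta\to\Omega$ be an orientation preserving biholomorphic map. For $t\in(\ln\beta,0)$ define $$A(t)=\frac{1}{2\pi e^t}\int_{\partial B_{e^t}(0)}\frac{1}{|f_z|}\,dl,\qquad B(t)=A''(t)-2A'(t).$$ Then $B(t)\ge0$ for all $t\in(\ln\beta,0)$. Furthermore, if $B(t_0)=0$ for some $t_0\in(\ln\beta,0)$, or if $\lim_{t\to0}B(t)=0$, then $B(t)=0$ for all $t\in(\ln\beta,0)$ and $$f(z)=C_1+C_2z\quad\text{or}\quad f(z)=C_1+\frac{C_2}{z+C_3}$$ for some constants $C_1,C_2,C_3\in\mathbb{C}$.
   Context: $B_r(0)$ is the open disk of radius $r$ centered at $0$, $dl$ is Euclidean arc length, and $f_z=\partial_z f$ is the complex derivative. *)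

theory Defs
  imports "HOL-Complex_Analysis.Complex_Analysis"
begin

definition annulus :: "real \<Rightarrow> complex set" where
  "annulus \<beta> = {z. \<beta> < norm z \<and> norm z < 1}"

text \<open>A(t) = 1/(2 pi e^t) times the arc-length integral of 1/|f'| over the circle |z| = e^t,
  written via the parametrisation z = e^t cis theta, dl = e^t dtheta.\<close>
definition A_fun :: "(complex \<Rightarrow> complex) \<Rightarrow> real \<Rightarrow> real" where
  "A_fun f t = (1 / (2 * pi * exp t)) *
     integral {0..2*pi} (\<lambda>\<theta>. exp t * (1 / norm (deriv f (of_real (exp t) * cis \<theta>))))"

definition B_fun :: "(complex \<Rightarrow> complex) \<Rightarrow> real \<Rightarrow> real" where
  "B_fun f t = deriv (deriv (A_fun f)) t - 2 * deriv (A_fun f) t"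

end

theory Submission
  imports Defs
begin

lemma exp_abs_bound:
  fixes l s d :: real
  assumes "d > 0"
  shows "abs l * exp (l * s) \<le> (1/d) * (exp (l * (s + d)) + exp (l * (s - d)))"
proof -
  have "abs l * d \<le> exp (abs l * d)"
    using exp_ge_add_one_self[of "abs l * d"] by linarith
  also have "exp (abs l * d) \<le> exp (l * d) + exp (- (l * d))"
    by (cases "l \<ge> 0") (auto simp: abs_if)
  finally have *: "abs l * d \<le> exp (l * d) + exp (- (l * d))" .
  have "abs l * d * exp (l * s) \<le> (exp (l * d) + exp (- (l * d))) * exp (l * s)"
    by (rule mult_right_mono[OF *]) simp
  also have "\<dots> = exp (l * (s + d)) + exp (l * (s - d))"
    by (simp add: algebra_simps flip: exp_add)
  finally show ?thesis using assms by (simp add: field_simps mult.commute mult.left_commute)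
qed

lemma expser_summable_deriv:
  fixes w l :: "nat \<Rightarrow> real"
  assumes summ: "\<And>s. s \<in> {a<..<b} \<Longrightarrow> summable (\<lambda>n. \<bar>w n\<bar> * exp (l n * s))"
    and s: "s \<in> {a<..<b}"
  shows "summable (\<lambda>n. \<bar>w n * l n\<bar> * exp (l n * s))"
proof -
  define d where "d = min (s - a) (b - s) / 2"
  have d: "d > 0" "s + d \<in> {a<..<b}" "s - d \<in> {a<..<b}" using s unfolding d_def min_def greaterThanLessThan_iff by (auto simp: field_simps)
  have "summable (\<lambda>n. (1/d) * (\<bar>w n\<bar> * exp (l n * (s + d)) + \<bar>w n\<bar> * exp (l n * (s - d))))"
    by (intro summable_mult summable_add summ d)
  then show ?thesis
  proof (rule summable_comparison_test')
    fix n
    have "\<bar>w n\<bar> * (\<bar>l n\<bar> * exp (l n * s)) \<le> \<bar>w n\<bar> * ((1/d) * (exp (l n * (s + d)) + exp (l n * (s - d))))"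
      by (intro mult_left_mono exp_abs_bound d) auto
    then show "norm (\<bar>w n * l n\<bar> * exp (l n * s)) \<le> (1/d) * (\<bar>w n\<bar> * exp (l n * (s + d)) + \<bar>w n\<bar> * exp (l n * (s - d)))"
      by (simp add: abs_mult algebra_simps)
  qed
qed

lemma expser_has_deriv:
  fixes w l :: "nat \<Rightarrow> real"
  assumes summ: "\<And>s. s \<in> {a<..<b} \<Longrightarrow> summable (\<lambda>n. \<bar>w n\<bar> * exp (l n * s))"
    and t: "t \<in> {a<..<b}"
  shows "((\<lambda>s. \<Sum>n. w n * exp (l n * s)) has_real_derivative (\<Sum>n. w n * l n * exp (l n * t))) (at t)"
proof -
  define d where "d = min (t - a) (b - t) / 2"
  have d: "d > 0" "t + d \<in> {a<..<b}" "t - d \<in> {a<..<b}" using t unfolding d_def min_def greaterThanLessThan_iff by (auto simp: field_simps)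
  have S1: "summable (\<lambda>n. \<bar>w n * l n\<bar> * exp (l n * (t + d)) + \<bar>w n * l n\<bar> * exp (l n * (t - d)))"
    using d by (intro summable_add expser_summable_deriv[OF summ]) auto
  have uc: "uniformly_convergent_on {t-d..t+d} (\<lambda>n x. \<Sum>i<n. w i * l i * exp (l i * x))"
  proof (rule Weierstrass_m_test'[OF _ S1])
    fix n x assume x: "x \<in> {t-d..t+d}"
    have "exp (l n * x) \<le> exp (l n * (t + d)) + exp (l n * (t - d))"
    proof (cases "l n \<ge> 0")
      case True
      then have "exp (l n * x) \<le> exp (l n * (t + d))" using x by (auto intro: mult_left_mono)
      then show ?thesis by (smt (verit) exp_gt_zero)
    next
      case False
      then have "exp (l n * x) \<le> exp (l n * (t - d))" using x
        by (auto intro!: mult_left_mono_neg)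
      then show ?thesis by (smt (verit) exp_gt_zero)
    qed
    then have "\<bar>w n * l n\<bar> * exp (l n * x) \<le> \<bar>w n * l n\<bar> * (exp (l n * (t + d)) + exp (l n * (t - d)))"
      by (intro mult_left_mono) auto
    then show "norm (w n * l n * exp (l n * x)) \<le> \<bar>w n * l n\<bar> * exp (l n * (t + d)) + \<bar>w n * l n\<bar> * exp (l n * (t - d))"
      by (simp add: abs_mult algebra_simps)
  qed
  have s0: "summable (\<lambda>n. w n * exp (l n * t))"
    by (rule summable_comparison_test'[OF summ[OF t]]) (simp add: abs_mult)
  have "t \<in> interior {t-d..t+d}" using d by auto
  show ?thesis
  proof (rule has_field_derivative_series'(2)[where S="{t-d..t+d}" and f="\<lambda>n x. w n * exp (l n * x)" and f'="\<lambda>n x. w n * l n * exp (l n * x)" and x0=t and x=t])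
    show "((\<lambda>x. w n * exp (l n * x)) has_field_derivative w n * l n * exp (l n * x)) (at x within {t-d..t+d})" for n x
      by (auto intro!: derivative_eq_intros)
  qed (use d uc s0 \<open>t \<in> interior {t-d..t+d}\<close> in auto)
qed

lemma integral_suminf_mtest:
  fixes u :: "nat \<Rightarrow> real \<Rightarrow> complex"
  assumes cont: "\<And>n. continuous_on {a..b} (u n)"
    and bd: "\<And>n x. x \<in> {a..b} \<Longrightarrow> norm (u n x) \<le> M n" and M: "summable M"
  shows "(\<lambda>n. integral {a..b} (u n)) sums integral {a..b} (\<lambda>x. \<Sum>n. u n x)"
    and "(\<lambda>x. \<Sum>n. u n x) integrable_on {a..b}"
proof -
  have ul: "uniform_limit {a..b} (\<lambda>n x. \<Sum>i<n. u i x) (\<lambda>x. \<Sum>i. u i x) sequentially"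
    by (rule Weierstrass_m_test[OF bd M])
  have c: "\<And>n. continuous_on {a..b} (\<lambda>x. \<Sum>i<n. u i x)"
    by (intro continuous_on_sum cont) 
  obtain I J where I: "\<And>n. ((\<lambda>x. \<Sum>i<n. u i x) has_integral I n) {a..b}"
    and J: "((\<lambda>x. \<Sum>i. u i x) has_integral J) {a..b}" and IJ: "I \<longlonglongrightarrow> J"
    using uniform_limit_integral[OF ul c] by auto
  have Ieq: "I n = (\<Sum>i<n. integral {a..b} (u i))" for n
  proof -
    have "((\<lambda>x. \<Sum>i<n. u i x) has_integral (\<Sum>i<n. integral {a..b} (u i))) {a..b}"
      by (intro has_integral_sum finite_lessThan integrable_integral integrable_continuous_interval cont)
    then show ?thesis using I[of n] has_integral_unique by blast
  qed
  then have "(\<lambda>n. \<Sum>i<n. integral {a..b} (u i)) = I" by auto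
  then show "(\<lambda>n. integral {a..b} (u n)) sums integral {a..b} (\<lambda>x. \<Sum>n. u n x)"
    using IJ J unfolding sums_def by (simp add: integral_unique)
  show "(\<lambda>x. \<Sum>n. u n x) integrable_on {a..b}" using J by blast
qed

lemma exp_eq_const_on:
  fixes p q :: "'a::topological_space \<Rightarrow> complex"
  assumes S: "connected S" and cp: "continuous_on S p" and cq: "continuous_on S q"
    and e: "\<And>x. x \<in> S \<Longrightarrow> exp (p x) = exp (q x)"
    and x0: "x0 \<in> S"
  obtains n :: int where "\<And>x. x \<in> S \<Longrightarrow> p x = q x + 2 * pi * \<i> * of_int n"
proof -
  define g where "g x = (p x - q x) / (2 * pi * \<i>)" for x
  have gi: "\<exists>n::int. g x = of_int n" if x: "x \<in> S" for x
  proof -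
    obtain n :: int where "p x = q x + (of_int (2 * n) * pi) * \<i>"
      using e[OF x] exp_eq by blast
    then have "g x = of_int n" by (simp add: g_def field_simps)
    then show ?thesis by blast
  qed
  have cg: "continuous_on S g" unfolding g_def by (intro continuous_intros cp cq) auto
  have "g constant_on S"
  proof (rule continuous_discrete_range_constant[OF S cg])
    fix x assume x: "x \<in> S"
    show "\<exists>e>0. \<forall>y. y \<in> S \<and> g y \<noteq> g x \<longrightarrow> e \<le> norm (g y - g x)"
    proof (intro exI[of _ 1] conjI allI impI)
      fix y assume y: "y \<in> S \<and> g y \<noteq> g x"
      obtain m n :: int where m: "g x = of_int m" and n: "g y = of_int n" using gi x y by blast
      have "m \<noteq> n" using y m n by auto
      then have "1 \<le> \<bar>of_int n - of_int m :: real\<bar>" by linarith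
      also have "\<bar>of_int n - of_int m :: real\<bar> = norm (g y - g x)"
        unfolding m n by (metis norm_of_int of_int_diff of_real_of_int_eq real_norm_def norm_of_real)
      finally show "1 \<le> norm (g y - g x)" .
    qed simp
  qed
  then obtain c where c: "\<And>x. x \<in> S \<Longrightarrow> g x = c" unfolding constant_on_def by blast
  obtain n :: int where n: "g x0 = of_int n" using gi x0 by blast
  show ?thesis
  proof (rule that[of n])
    fix x assume "x \<in> S"
    then have "g x = of_int n" using c x0 n by metis
    then show "p x = q x + 2 * pi * \<i> * of_int n" by (simp add: g_def field_simps)
  qed
qed

lemma circlepath_integral_eq:
  assumes r: "r > 0"
  shows "contour_integral (circlepath 0 r) g = integral {0..2*pi} (\<lambda>\<theta>. g (r * cis \<theta>) * (\<i> * r * cis \<theta>))"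
proof -
  define F where "F \<theta> = g (r * cis \<theta>) * (\<i> * r * cis \<theta>)" for \<theta>
  have "contour_integral (circlepath 0 r) g = integral {0..1} (\<lambda>x. g (circlepath 0 r x) * vector_derivative (circlepath 0 r) (at x))"
    by (rule contour_integral_integral)
  also have "\<dots> = integral {0..1} (\<lambda>x. of_real (2*pi) * F (2*pi*x))"
    by (intro integral_cong) (simp only: vector_derivative_circlepath, simp add: circlepath F_def cis_conv_exp mult_ac)
  also have "\<dots> = of_real (2*pi) * integral {0..1} (\<lambda>x. F (2*pi*x))"
    by simp
  also have "{0..1::real} = (\<lambda>x. x / (2*pi)) ` {0..2*pi}"
  proof -
    have "bij_betw (\<lambda>x. x / (2*pi)) {0..2*pi} {0..1}"
      by (rule bij_betwI[of _ _ _ "\<lambda>x. x * (2*pi)"]) (auto simp: field_simps)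
    then show ?thesis by (simp add: bij_betw_def)
  qed
  also have "integral ((\<lambda>x. x / (2*pi)) ` {0..2*pi}) (\<lambda>x. F (2*pi*x)) = (1 / \<bar>2*pi\<bar>) *\<^sub>R integral {0..2*pi} F"
    by (rule integral_stretch_real) simp
  finally show ?thesis by (simp add: F_def[abs_def] scaleR_conv_of_real)
qed

lemma annulus_eq: "annulus \<beta> = ball 0 1 - cball 0 \<beta>"
  by (auto simp: annulus_def)

lemma open_annulus: "open (annulus \<beta>)"
  by (simp add: annulus_eq open_Diff)

lemma sphere_sub_annulus: "\<beta> < r \<Longrightarrow> r < 1 \<Longrightarrow> sphere 0 r \<subseteq> annulus \<beta>"
  by (auto simp: annulus_def)

lemma contour_integral_sums_circle:
  fixes u :: "nat \<Rightarrow> complex \<Rightarrow> complex"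
  assumes r: "r > 0" and cont: "\<And>n. continuous_on (sphere 0 r) (u n)"
    and bd: "\<And>n w. w \<in> sphere 0 r \<Longrightarrow> norm (u n w) \<le> M n" and M: "summable M"
    and su: "\<And>w. w \<in> sphere 0 r \<Longrightarrow> (\<lambda>n. u n w) sums U w"
  shows "(\<lambda>n. contour_integral (circlepath 0 r) (u n)) sums contour_integral (circlepath 0 r) U"
proof -
  have ul0: "uniform_limit (sphere 0 r) (\<lambda>n x. \<Sum>i<n. u i x) (\<lambda>x. \<Sum>i. u i x) sequentially"
    by (rule Weierstrass_m_test[OF bd M])
  have ul: "uniform_limit (sphere 0 r) (\<lambda>n x. \<Sum>i<n. u i x) U sequentially"
    using ul0 by (rule uniform_limit_cong'[THEN iffD1, rotated -1]) (use su in \<open>auto simp: sums_iff\<close>)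
  have ci: "\<And>i. u i contour_integrable_on circlepath 0 r"
    using cont r by (intro contour_integrable_continuous_circlepath) simp
  have "((\<lambda>n. contour_integral (circlepath 0 r) (\<lambda>x. \<Sum>i<n. u i x)) \<longlonglongrightarrow> contour_integral (circlepath 0 r) U)"
    by (rule contour_integral_uniform_limit_circlepath(2)[OF _ ul _ r])
       (auto intro!: always_eventually contour_integrable_sum ci)
  moreover have "contour_integral (circlepath 0 r) (\<lambda>x. \<Sum>i<n. u i x) = (\<Sum>i<n. contour_integral (circlepath 0 r) (u i))" for n
    by (rule contour_integral_sum) (auto intro: ci)
  ultimately show ?thesis unfolding sums_def by simp
qed

lemma annulus_circles_homotopic:
  assumes "\<beta> < r1" "r1 < 1" "\<beta> < r2" "r2 < 1" and b0: "0 \<le> \<beta>"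
  shows "homotopic_loops (annulus \<beta>) (circlepath 0 r1) (circlepath 0 r2)"
proof (rule homotopic_loops_linear)
  fix t :: real assume "t \<in> {0..1}"
  show "closed_segment (circlepath 0 r1 t) (circlepath 0 r2 t) \<subseteq> annulus \<beta>"
  proof
    fix x assume "x \<in> closed_segment (circlepath 0 r1 t) (circlepath 0 r2 t)"
    then obtain u where u: "0 \<le> u" "u \<le> 1" and x: "x = (1 - u) *\<^sub>R circlepath 0 r1 t + u *\<^sub>R circlepath 0 r2 t"
      unfolding closed_segment_def by auto
    define \<rho> where "\<rho> = (1 - u) * r1 + u * r2"
    have "\<rho> \<ge> 0" using assms b0 u unfolding \<rho>_def by (intro add_nonneg_nonneg mult_nonneg_nonneg) auto
    have "x = of_real \<rho> * exp (2 * of_real pi * \<i> * of_real t)"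
      by (simp add: x circlepath scaleR_conv_of_real \<rho>_def algebra_simps)
    then have "norm x = \<rho>"
      using \<open>\<rho> \<ge> 0\<close> by (simp add: norm_mult norm_exp_eq_Re)
    then have nx: "norm x = (1 - u) * r1 + u * r2" by (simp add: \<rho>_def)
    have a1: "(1 - u) * r1 \<ge> (1 - u) * min r1 r2" "u * r2 \<ge> u * min r1 r2"
      using u by (auto intro!: mult_left_mono)
    have a2: "(1 - u) * r1 \<le> (1 - u) * max r1 r2" "u * r2 \<le> u * max r1 r2"
      using u by (auto intro!: mult_left_mono)
    have "(1 - u) * min r1 r2 + u * min r1 r2 = min r1 r2" "(1 - u) * max r1 r2 + u * max r1 r2 = max r1 r2"
      by (simp_all add: algebra_simps)
    then have "min r1 r2 \<le> norm x" "norm x \<le> max r1 r2" using a1 a2 nx by linarith+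
    then show "x \<in> annulus \<beta>" unfolding annulus_def using assms by auto
  qed
qed (auto)

lemma annulus_contour_integral_indep:
  assumes holo: "g holomorphic_on annulus \<beta>"
    and "\<beta> < r1" "r1 < 1" "\<beta> < r2" "r2 < 1" and b0: "0 \<le> \<beta>"
  shows "contour_integral (circlepath 0 r1) g = contour_integral (circlepath 0 r2) g"
  by (rule Cauchy_theorem_homotopic_loops[OF annulus_circles_homotopic[OF assms(2-6)] open_annulus holo]) auto

lemma bound_on_circle:
  assumes holo: "h holomorphic_on annulus \<beta>" and "\<beta> < r" "r < 1"
  obtains M where "M \<ge> 0" "\<And>w. norm w = r \<Longrightarrow> norm (h w) \<le> M"
proof -
  have "continuous_on (sphere 0 r) h"
    using holomorphic_on_imp_continuous_on[OF holo] sphere_sub_annulus[OF assms(2,3)]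
    by (rule continuous_on_subset)
  then have "compact (h ` sphere 0 r)" by (intro compact_continuous_image) auto
  then obtain M where "M > 0" "\<And>y. y \<in> h ` sphere 0 r \<Longrightarrow> norm y \<le> M"
    using compact_imp_bounded bounded_pos by metis
  then show ?thesis using that[of M] by auto
qed

definition lc :: "(complex \<Rightarrow> complex) \<Rightarrow> real \<Rightarrow> nat \<Rightarrow> complex" where
  "lc h \<beta> n = contour_integral (circlepath 0 ((\<beta>+1)/2)) (\<lambda>w. h w / w ^ Suc n) / (2 * pi * \<i>)"

definition ld :: "(complex \<Rightarrow> complex) \<Rightarrow> real \<Rightarrow> nat \<Rightarrow> complex" where
  "ld h \<beta> n = contour_integral (circlepath 0 ((\<beta>+1)/2)) (\<lambda>w. h w * w ^ n) / (2 * pi * \<i>)"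

lemma zero_notin_annulus: "0 \<le> \<beta> \<Longrightarrow> 0 \<notin> annulus \<beta>"
  by (auto simp: annulus_def)

lemma lc_radius:
  assumes holo: "h holomorphic_on annulus \<beta>" and b: "0 < \<beta>" "\<beta> < 1" and r: "\<beta> < r" "r < 1"
  shows "lc h \<beta> n = contour_integral (circlepath 0 r) (\<lambda>w. h w / w ^ Suc n) / (2 * pi * \<i>)"
proof -
  have "(\<lambda>w. h w / w ^ Suc n) holomorphic_on annulus \<beta>"
    using zero_notin_annulus[of \<beta>] b by (intro holomorphic_intros holo) auto
  then show ?thesis unfolding lc_def
    using annulus_contour_integral_indep[of _ \<beta> "(\<beta>+1)/2" r] b r by simp
qed

lemma ld_radius:
  assumes holo: "h holomorphic_on annulus \<beta>" and b: "0 < \<beta>" "\<beta> < 1" and r: "\<beta> < r" "r < 1"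
  shows "ld h \<beta> n = contour_integral (circlepath 0 r) (\<lambda>w. h w * w ^ n) / (2 * pi * \<i>)"
proof -
  have "(\<lambda>w. h w * w ^ n) holomorphic_on annulus \<beta>"
    by (intro holomorphic_intros holo)
  then show ?thesis unfolding ld_def
    using annulus_contour_integral_indep[of _ \<beta> "(\<beta>+1)/2" r] b r by simp
qed

lemma cont_on_sphere:
  assumes holo: "h holomorphic_on annulus \<beta>" and r: "\<beta> < r" "r < 1"
  shows "continuous_on (sphere 0 r) h"
  using holomorphic_on_imp_continuous_on[OF holo] sphere_sub_annulus[OF r]
  by (rule continuous_on_subset)

lemma lc_bound:
  assumes holo: "h holomorphic_on annulus \<beta>" and b: "0 < \<beta>" "\<beta> < 1" and r: "\<beta> < r" "r < 1"
    and M: "\<And>w. norm w = r \<Longrightarrow> norm (h w) \<le> M" "M \<ge> 0"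
  shows "norm (lc h \<beta> n) \<le> M / r ^ n"
proof -
  have r0: "r > 0" using b r by simp
  have "continuous_on (sphere 0 r) (\<lambda>w. h w / w ^ Suc n)"
    using cont_on_sphere[OF holo r] r0 by (intro continuous_intros) auto
  then have "((\<lambda>w. h w / w ^ Suc n) has_contour_integral contour_integral (circlepath 0 r) (\<lambda>w. h w / w ^ Suc n)) (circlepath 0 r)"
    using r0 by (intro has_contour_integral_integral contour_integrable_continuous_circlepath) simp
  then have "norm (contour_integral (circlepath 0 r) (\<lambda>w. h w / w ^ Suc n)) \<le> (M / r ^ Suc n) * (2 * pi * r)"
  proof (rule has_contour_integral_bound_circlepath)
    fix x :: complex assume "norm (x - 0) = r"
    then show "norm (h x / x ^ Suc n) \<le> M / r ^ Suc n"
    proof -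
      have "norm x ^ Suc n = r ^ Suc n" using \<open>norm (x - 0) = r\<close> by simp
      then have "norm (h x / x ^ Suc n) = norm (h x) / r ^ Suc n" by (simp only: norm_divide norm_power)
      also have "\<dots> \<le> M / r ^ Suc n" using M \<open>norm (x - 0) = r\<close> r0 by (intro divide_right_mono) auto
      finally show ?thesis .
    qed
  qed (use r0 M in auto)
  also have "\<dots> = 2 * pi * (M / r ^ n)" using r0 by (simp add: field_simps)
  finally show ?thesis
    by (simp add: lc_radius[OF holo b r] norm_divide norm_mult field_simps)
qed

lemma ld_bound:
  assumes holo: "h holomorphic_on annulus \<beta>" and b: "0 < \<beta>" "\<beta> < 1" and r: "\<beta> < r" "r < 1"
    and M: "\<And>w. norm w = r \<Longrightarrow> norm (h w) \<le> M" "M \<ge> 0"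
  shows "norm (ld h \<beta> n) \<le> M * r ^ Suc n"
proof -
  have r0: "r > 0" using b r by simp
  have "continuous_on (sphere 0 r) (\<lambda>w. h w * w ^ n)"
    using cont_on_sphere[OF holo r] r0 by (intro continuous_intros) auto
  then have "((\<lambda>w. h w * w ^ n) has_contour_integral contour_integral (circlepath 0 r) (\<lambda>w. h w * w ^ n)) (circlepath 0 r)"
    using r0 by (intro has_contour_integral_integral contour_integrable_continuous_circlepath) simp
  then have "norm (contour_integral (circlepath 0 r) (\<lambda>w. h w * w ^ n)) \<le> (M * r ^ n) * (2 * pi * r)"
  proof (rule has_contour_integral_bound_circlepath)
    fix x :: complex assume "norm (x - 0) = r"
    then show "norm (h x * x ^ n) \<le> M * r ^ n"
      using M r0 by (simp add: norm_mult norm_power mult_right_mono)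
  qed (use r0 M in auto)
  also have "\<dots> = 2 * pi * (M * r ^ Suc n)" using r0 by (simp add: field_simps)
  finally show ?thesis
    by (simp add: ld_radius[OF holo b r] norm_divide norm_mult field_simps)
qed

lemma lc_summable:
  assumes holo: "h holomorphic_on annulus \<beta>" and b: "0 < \<beta>" "\<beta> < 1" and z: "\<beta> < \<rho>" "\<rho> < 1"
  shows "summable (\<lambda>n. norm (lc h \<beta> n) * \<rho> ^ n)"
proof -
  define r where "r = (\<rho> + 1) / 2"
  have r: "\<beta> < r" "r < 1" "\<rho> < r" using z by (auto simp: r_def)
  obtain M where M: "M \<ge> 0" "\<And>w. norm w = r \<Longrightarrow> norm (h w) \<le> M"
    using bound_on_circle[OF holo r(1,2)] by blast
  have "summable (\<lambda>n. M * (\<rho> / r) ^ n)"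
    using r z b by (intro summable_mult summable_geometric) auto
  then show ?thesis
  proof (rule summable_comparison_test')
    fix n
    have "norm (lc h \<beta> n) * \<rho> ^ n \<le> M / r ^ n * \<rho> ^ n"
      using lc_bound[OF holo b r(1,2) M(2,1)] z b by (intro mult_right_mono) auto
    then show "norm (norm (lc h \<beta> n) * \<rho> ^ n) \<le> M * (\<rho> / r) ^ n"
      using z b by (simp add: power_divide field_simps)
  qed
qed

lemma ld_summable:
  assumes holo: "h holomorphic_on annulus \<beta>" and b: "0 < \<beta>" "\<beta> < 1" and z: "\<beta> < \<rho>" "\<rho> < 1"
  shows "summable (\<lambda>n. norm (ld h \<beta> n) / \<rho> ^ Suc n)"
proof -
  define r where "r = (\<beta> + \<rho>) / 2"
  have r: "\<beta> < r" "r < 1" "r < \<rho>" using z by (auto simp: r_def)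
  obtain M where M: "M \<ge> 0" "\<And>w. norm w = r \<Longrightarrow> norm (h w) \<le> M"
    using bound_on_circle[OF holo r(1,2)] by blast
  have "summable (\<lambda>n. (M * (r / \<rho>)) * (r / \<rho>) ^ n)"
    using r z b by (intro summable_mult summable_geometric) auto
  then show ?thesis
  proof (rule summable_comparison_test')
    fix n
    have "norm (ld h \<beta> n) / \<rho> ^ Suc n \<le> M * r ^ Suc n / \<rho> ^ Suc n"
      using ld_bound[OF holo b r(1,2) M(2,1)] z b by (intro divide_right_mono) auto
    then show "norm (norm (ld h \<beta> n) / \<rho> ^ Suc n) \<le> (M * (r / \<rho>)) * (r / \<rho>) ^ n"
      using z b by (simp add: power_divide field_simps)
  qed
qed

lemma laurent_expansion:
  assumes holo: "h holomorphic_on annulus \<beta>" and b: "0 < \<beta>" "\<beta> < 1" and z: "z \<in> annulus \<beta>"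
  shows "h z = (\<Sum>n. lc h \<beta> n * z ^ n) + (\<Sum>n. ld h \<beta> n / z ^ Suc n)"
proof -
  define \<rho> where "\<rho> = norm z"
  have \<rho>: "\<beta> < \<rho>" "\<rho> < 1" using z by (auto simp: annulus_def \<rho>_def)
  define r1 where "r1 = (\<beta> + \<rho>) / 2"
  define r2 where "r2 = (\<rho> + 1) / 2"
  have r1: "\<beta> < r1" "r1 < 1" "r1 < \<rho>" "0 < r1" using \<rho> b by (auto simp: r1_def)
  have r2: "\<beta> < r2" "r2 < 1" "\<rho> < r2" "0 < r2" using \<rho> b by (auto simp: r2_def)
  have z0: "z \<noteq> 0" using \<rho> b by (auto simp: \<rho>_def)
  define \<phi> where "\<phi> w = (if w = z then deriv h z else (h w - h z) / (w - z))" for w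
  have hphi: "\<phi> holomorphic_on annulus \<beta>"
    unfolding \<phi>_def[abs_def] by (rule pole_lemma_open[OF holo open_annulus])
  have E1: "contour_integral (circlepath 0 r2) \<phi> = contour_integral (circlepath 0 r1) \<phi>"
    using annulus_contour_integral_indep[OF hphi r2(1,2) r1(1,2)] b by simp
  have ch1: "continuous_on (sphere 0 r1) h" by (rule cont_on_sphere[OF holo r1(1,2)])
  have ch2: "continuous_on (sphere 0 r2) h" by (rule cont_on_sphere[OF holo r2(1,2)])
  define I2 where "I2 = contour_integral (circlepath 0 r2) (\<lambda>w. h w / (w - z))"
  define I1 where "I1 = contour_integral (circlepath 0 r1) (\<lambda>w. h w / (w - z))"
  have nz2: "w - z \<noteq> 0" if "w \<in> sphere 0 r2" for w using that r2 by (auto simp: \<rho>_def)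
  have nz1: "w - z \<noteq> 0" if "w \<in> sphere 0 r1" for w using that r1 by (auto simp: \<rho>_def)
  have int2a: "(\<lambda>w. h w / (w - z)) contour_integrable_on circlepath 0 r2"
    using r2 by (intro contour_integrable_continuous_circlepath) (auto intro!: continuous_intros ch2 dest: nz2)
  have int2b: "(\<lambda>w. 1 / (w - z)) contour_integrable_on circlepath 0 r2"
    using r2 by (intro contour_integrable_continuous_circlepath) (auto intro!: continuous_intros dest: nz2)
  have int1a: "(\<lambda>w. h w / (w - z)) contour_integrable_on circlepath 0 r1"
    using r1 by (intro contour_integrable_continuous_circlepath) (auto intro!: continuous_intros ch1 dest: nz1)
  have int1b: "(\<lambda>w. 1 / (w - z)) contour_integrable_on circlepath 0 r1"
    using r1 by (intro contour_integrable_continuous_circlepath) (auto intro!: continuous_intros dest: nz1)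
  have J2: "contour_integral (circlepath 0 r2) (\<lambda>w. 1 / (w - z)) = 2 * pi * \<i>"
  proof -
    have "((\<lambda>u. (\<lambda>_. 1) u / (u - z)) has_contour_integral (2 * of_real pi * \<i> * 1)) (circlepath 0 r2)"
      by (rule Cauchy_integral_circlepath_simple) (use r2 in \<open>auto simp: \<rho>_def\<close>)
    then show ?thesis by (simp add: contour_integral_unique)
  qed
  have J1: "contour_integral (circlepath 0 r1) (\<lambda>w. 1 / (w - z)) = 0"
  proof -
    have "((\<lambda>w. 1 / (w - z)) has_contour_integral 0) (circlepath 0 r1)"
    proof (rule Cauchy_theorem_disc_simple[of _ 0 \<rho>])
      show "(\<lambda>w. 1 / (w - z)) holomorphic_on ball 0 \<rho>"
        by (intro holomorphic_intros) (auto simp: \<rho>_def)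
      show "path_image (circlepath 0 r1) \<subseteq> ball 0 \<rho>" using r1 by auto
    qed auto
    then show ?thesis by (simp add: contour_integral_unique)
  qed
  have P2: "contour_integral (circlepath 0 r2) \<phi> = I2 - h z * (2 * pi * \<i>)"
  proof -
    have "contour_integral (circlepath 0 r2) \<phi> = contour_integral (circlepath 0 r2) (\<lambda>w. h w / (w - z) - h z * (1 / (w - z)))"
      by (rule contour_integral_eq) (use r2 in \<open>auto simp: \<phi>_def \<rho>_def diff_divide_distrib\<close>)
    also have "\<dots> = I2 - contour_integral (circlepath 0 r2) (\<lambda>w. h z * (1 / (w - z)))"
      unfolding I2_def by (rule contour_integral_diff[OF int2a contour_integrable_lmul[OF int2b]])
    also have "\<dots> = I2 - h z * (2 * pi * \<i>)"
      by (simp only: contour_integral_lmul[OF int2b] J2)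
    finally show ?thesis .
  qed
  have P1: "contour_integral (circlepath 0 r1) \<phi> = I1"
  proof -
    have "contour_integral (circlepath 0 r1) \<phi> = contour_integral (circlepath 0 r1) (\<lambda>w. h w / (w - z) - h z * (1 / (w - z)))"
      by (rule contour_integral_eq) (use r1 in \<open>auto simp: \<phi>_def \<rho>_def diff_divide_distrib\<close>)
    also have "\<dots> = I1 - contour_integral (circlepath 0 r1) (\<lambda>w. h z * (1 / (w - z)))"
      unfolding I1_def by (rule contour_integral_diff[OF int1a contour_integrable_lmul[OF int1b]])
    also have "\<dots> = I1"
      by (simp only: contour_integral_lmul[OF int1b] J1) simp
    finally show ?thesis .
  qed
  have hz: "h z = (I2 - I1) / (2 * pi * \<i>)"
    using E1 P1 P2 by (simp add: field_simps)
  obtain M2 where M2: "M2 \<ge> 0" "\<And>w. norm w = r2 \<Longrightarrow> norm (h w) \<le> M2"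
    using bound_on_circle[OF holo r2(1,2)] by blast
  have S2: "(\<lambda>n. contour_integral (circlepath 0 r2) (\<lambda>w. z ^ n * (h w / w ^ Suc n))) sums I2"
    unfolding I2_def
  proof (rule contour_integral_sums_circle[where M = "\<lambda>n. (M2 / r2) * (\<rho> / r2) ^ n"])
    show "continuous_on (sphere 0 r2) (\<lambda>w. z ^ n * (h w / w ^ Suc n))" for n
      using r2 by (intro continuous_intros ch2) auto
    show "norm (z ^ n * (h w / w ^ Suc n)) \<le> (M2 / r2) * (\<rho> / r2) ^ n" if "w \<in> sphere 0 r2" for n w
    proof -
      have nw: "norm w = r2" using that by simp
      have "norm (z ^ n * (h w / w ^ Suc n)) = \<rho> ^ n * norm (h w) / r2 ^ Suc n"
        by (simp only: norm_mult norm_divide norm_power nw \<rho>_def) simp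
      also have "\<dots> \<le> \<rho> ^ n * M2 / r2 ^ Suc n"
        using M2 nw r2 \<rho> b by (intro divide_right_mono mult_left_mono) auto
      also have "\<dots> = (M2 / r2) * (\<rho> / r2) ^ n" by (simp add: power_divide field_simps)
      finally show ?thesis .
    qed
    show "summable (\<lambda>n. (M2 / r2) * (\<rho> / r2) ^ n)"
      using r2 \<rho> b by (intro summable_mult summable_geometric) auto
    show "(\<lambda>n. z ^ n * (h w / w ^ Suc n)) sums (h w / (w - z))" if "w \<in> sphere 0 r2" for w
    proof -
      have w0: "w \<noteq> 0" "w - z \<noteq> 0" using that r2 nz2 by auto
      have "norm (z / w) < 1" using that r2 by (simp add: norm_divide \<rho>_def[symmetric])
      then have "(\<lambda>n. (z / w) ^ n) sums (1 / (1 - z / w))" by (rule geometric_sums)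
      then have "(\<lambda>n. h w / w * (z / w) ^ n) sums (h w / w * (1 / (1 - z / w)))" by (rule sums_mult)
      moreover have "(\<lambda>n. h w / w * (z / w) ^ n) = (\<lambda>n. z ^ n * (h w / w ^ Suc n))"
        using w0 by (simp add: power_divide field_simps)
      moreover have "h w / w * (1 / (1 - z / w)) = h w / (w - z)"
        using w0 by (simp add: field_simps)
      ultimately show ?thesis by (simp only:)
    qed
  qed (use r2 in auto)
  have "contour_integral (circlepath 0 r2) (\<lambda>w. z ^ n * (h w / w ^ Suc n)) = (2 * pi * \<i>) * (lc h \<beta> n * z ^ n)" for n
  proof -
    have "(\<lambda>w. h w / w ^ Suc n) contour_integrable_on circlepath 0 r2"
      using r2 by (intro contour_integrable_continuous_circlepath) (auto intro!: continuous_intros ch2)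
    then have "contour_integral (circlepath 0 r2) (\<lambda>w. z ^ n * (h w / w ^ Suc n)) = z ^ n * contour_integral (circlepath 0 r2) (\<lambda>w. h w / w ^ Suc n)"
      by (rule contour_integral_lmul)
    then show ?thesis
      by (simp add: lc_radius[OF holo b r2(1,2)])
  qed
  with S2 have "(\<lambda>n. (2 * pi * \<i>) * (lc h \<beta> n * z ^ n)) sums I2" by simp
  from sums_divide[OF this, of "2 * pi * \<i>"]
  have S2': "(\<lambda>n. lc h \<beta> n * z ^ n) sums (I2 / (2 * pi * \<i>))" by simp
  obtain M1 where M1: "M1 \<ge> 0" "\<And>w. norm w = r1 \<Longrightarrow> norm (h w) \<le> M1"
    using bound_on_circle[OF holo r1(1,2)] by blast
  have S1: "(\<lambda>n. contour_integral (circlepath 0 r1) (\<lambda>w. - (h w * w ^ n) / z ^ Suc n)) sums I1"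
    unfolding I1_def
  proof (rule contour_integral_sums_circle[where M = "\<lambda>n. (M1 / \<rho>) * (r1 / \<rho>) ^ n"])
    show "continuous_on (sphere 0 r1) (\<lambda>w. - (h w * w ^ n) / z ^ Suc n)" for n
      using z0 by (intro continuous_intros ch1) auto
    show "norm (- (h w * w ^ n) / z ^ Suc n) \<le> (M1 / \<rho>) * (r1 / \<rho>) ^ n" if "w \<in> sphere 0 r1" for n w
    proof -
      have nw: "norm w = r1" using that by simp
      have "norm (- (h w * w ^ n) / z ^ Suc n) = norm (h w) * r1 ^ n / \<rho> ^ Suc n"
        by (simp only: norm_mult norm_divide norm_power norm_minus_cancel nw \<rho>_def)
      also have "\<dots> \<le> M1 * r1 ^ n / \<rho> ^ Suc n"
        using M1 nw r1 \<rho> b by (intro divide_right_mono mult_right_mono) auto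
      also have "\<dots> = (M1 / \<rho>) * (r1 / \<rho>) ^ n" by (simp add: power_divide field_simps)
      finally show ?thesis .
    qed
    show "summable (\<lambda>n. (M1 / \<rho>) * (r1 / \<rho>) ^ n)"
      using r1 \<rho> b by (intro summable_mult summable_geometric) auto
    show "(\<lambda>n. - (h w * w ^ n) / z ^ Suc n) sums (h w / (w - z))" if "w \<in> sphere 0 r1" for w
    proof -
      have w0: "w \<noteq> 0" "w - z \<noteq> 0" using that r1 nz1 by auto
      have "norm (w / z) < 1" using that r1 z0 by (simp add: norm_divide \<rho>_def[symmetric])
      then have "(\<lambda>n. (w / z) ^ n) sums (1 / (1 - w / z))" by (rule geometric_sums)
      then have "(\<lambda>n. - h w / z * (w / z) ^ n) sums (- h w / z * (1 / (1 - w / z)))" by (rule sums_mult)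
      moreover have "(\<lambda>n. - h w / z * (w / z) ^ n) = (\<lambda>n. - (h w * w ^ n) / z ^ Suc n)"
        using z0 by (simp add: power_divide field_simps)
      moreover have "- h w / z * (1 / (1 - w / z)) = h w / (w - z)"
        using w0 z0 by (simp add: field_simps)
      ultimately show ?thesis by (simp only:)
    qed
  qed (use r1 in auto)
  have "contour_integral (circlepath 0 r1) (\<lambda>w. - (h w * w ^ n) / z ^ Suc n) = - (2 * pi * \<i>) * (ld h \<beta> n / z ^ Suc n)" for n
  proof -
    have ci: "(\<lambda>w. h w * w ^ n) contour_integrable_on circlepath 0 r1"
      using r1 by (intro contour_integrable_continuous_circlepath) (auto intro!: continuous_intros ch1)
    have "contour_integral (circlepath 0 r1) (\<lambda>w. - (h w * w ^ n) / z ^ Suc n)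
        = contour_integral (circlepath 0 r1) (\<lambda>w. (- 1 / z ^ Suc n) * (h w * w ^ n))"
      by (rule contour_integral_eq) (simp add: field_simps)
    also have "\<dots> = (- 1 / z ^ Suc n) * contour_integral (circlepath 0 r1) (\<lambda>w. h w * w ^ n)"
      by (rule contour_integral_lmul[OF ci])
    also have "\<dots> = - (2 * pi * \<i>) * (ld h \<beta> n / z ^ Suc n)"
      by (simp add: ld_radius[OF holo b r1(1,2)] field_simps)
    finally show ?thesis .
  qed
  with S1 have "(\<lambda>n. - (2 * pi * \<i>) * (ld h \<beta> n / z ^ Suc n)) sums I1" by simp
  from sums_divide[OF this, of "- (2 * pi * \<i>)"]
  have S1': "(\<lambda>n. ld h \<beta> n / z ^ Suc n) sums (- I1 / (2 * pi * \<i>))" by simp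
  have "h z = I2 / (2 * pi * \<i>) + (- I1 / (2 * pi * \<i>))"
    using hz by (simp add: diff_divide_distrib)
  then show ?thesis
    by (simp only: sums_unique[OF S2', symmetric] sums_unique[OF S1', symmetric])
qed

lemma fourier_lc:
  assumes holo: "h holomorphic_on annulus \<beta>" and b: "0 < \<beta>" "\<beta> < 1" and r: "\<beta> < r" "r < 1"
  shows "integral {0..2*pi} (\<lambda>\<theta>. h (of_real r * cis \<theta>) * cis (- (real n * \<theta>))) = 2 * pi * r ^ n * lc h \<beta> n"
proof -
  have r0: "r > 0" using b r by simp
  have eq: "h (of_real r * cis \<theta>) / (of_real r * cis \<theta>) ^ Suc n * (\<i> * of_real r * cis \<theta>)
      = (\<i> / of_real r ^ n) * (h (of_real r * cis \<theta>) * cis (- (real n * \<theta>)))" for \<theta>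
  proof -
    have p: "(of_real r * cis \<theta>) ^ Suc n = of_real r ^ Suc n * cis (real (Suc n) * \<theta>)"
      by (simp only: power_mult_distrib Complex.DeMoivre)
    have c: "cis \<theta> / cis (real (Suc n) * \<theta>) = cis (- (real n * \<theta>))"
      by (simp add: cis_divide algebra_simps)
    have "h (of_real r * cis \<theta>) / (of_real r * cis \<theta>) ^ Suc n * (\<i> * of_real r * cis \<theta>)
       = (\<i> / of_real r ^ n) * h (of_real r * cis \<theta>) * (cis \<theta> / cis (real (Suc n) * \<theta>))"
      unfolding p using r0 by (simp add: field_simps)
    then show ?thesis unfolding c by simp
  qed
  have "2 * pi * \<i> * lc h \<beta> n = contour_integral (circlepath 0 r) (\<lambda>w. h w / w ^ Suc n)"
    by (simp add: lc_radius[OF holo b r])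
  also have "\<dots> = integral {0..2*pi} (\<lambda>\<theta>. (\<i> / of_real r ^ n) * (h (of_real r * cis \<theta>) * cis (- (real n * \<theta>))))"
    unfolding circlepath_integral_eq[OF r0] eq ..
  also have "\<dots> = (\<i> / of_real r ^ n) * integral {0..2*pi} (\<lambda>\<theta>. h (of_real r * cis \<theta>) * cis (- (real n * \<theta>)))"
    by simp
  finally show ?thesis using r0 by (simp add: field_simps)
qed

lemma fourier_ld:
  assumes holo: "h holomorphic_on annulus \<beta>" and b: "0 < \<beta>" "\<beta> < 1" and r: "\<beta> < r" "r < 1"
  shows "integral {0..2*pi} (\<lambda>\<theta>. h (of_real r * cis \<theta>) * cis (real (Suc n) * \<theta>)) = 2 * pi * ld h \<beta> n / r ^ Suc n"
proof -
  have r0: "r > 0" using b r by simp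
  have eq: "h (of_real r * cis \<theta>) * (of_real r * cis \<theta>) ^ n * (\<i> * of_real r * cis \<theta>)
      = (\<i> * of_real r ^ Suc n) * (h (of_real r * cis \<theta>) * cis (real (Suc n) * \<theta>))" for \<theta>
  proof -
    have p: "(of_real r * cis \<theta>) ^ n = of_real r ^ n * cis (real n * \<theta>)"
      by (simp only: power_mult_distrib Complex.DeMoivre)
    have c: "cis (real n * \<theta>) * cis \<theta> = cis (real (Suc n) * \<theta>)"
      by (simp add: cis_mult algebra_simps)
    show ?thesis unfolding p c[symmetric] by (simp add: field_simps)
  qed
  have "2 * pi * \<i> * ld h \<beta> n = contour_integral (circlepath 0 r) (\<lambda>w. h w * w ^ n)"
    by (simp add: ld_radius[OF holo b r])
  also have "\<dots> = integral {0..2*pi} (\<lambda>\<theta>. (\<i> * of_real r ^ Suc n) * (h (of_real r * cis \<theta>) * cis (real (Suc n) * \<theta>)))"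
    unfolding circlepath_integral_eq[OF r0] eq ..
  also have "\<dots> = (\<i> * of_real r ^ Suc n) * integral {0..2*pi} (\<lambda>\<theta>. h (of_real r * cis \<theta>) * cis (real (Suc n) * \<theta>))"
    by simp
  finally show ?thesis using r0 by (simp add: field_simps)
qed

lemma parseval:
  assumes holo: "h holomorphic_on annulus \<beta>" and b: "0 < \<beta>" "\<beta> < 1" and r: "\<beta> < r" "r < 1"
  shows "summable (\<lambda>n. norm (lc h \<beta> n) ^ 2 * r ^ (2 * n))"
    and "summable (\<lambda>n. norm (ld h \<beta> n) ^ 2 / r ^ (2 * Suc n))"
    and "integral {0..2*pi} (\<lambda>\<theta>. norm (h (of_real r * cis \<theta>)) ^ 2) =
         2 * pi * ((\<Sum>n. norm (lc h \<beta> n) ^ 2 * r ^ (2 * n)) + (\<Sum>n. norm (ld h \<beta> n) ^ 2 / r ^ (2 * Suc n)))"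
proof -
  have r0: "r > 0" using b r by simp
  define H where "H \<theta> = h (of_real r * cis \<theta>)" for \<theta>
  have inA: "of_real r * cis \<theta> \<in> annulus \<beta>" for \<theta>
    using r r0 by (simp add: annulus_def norm_mult)
  have cH: "continuous_on {0..2*pi} H"
    unfolding H_def
    by (rule continuous_on_compose2[OF cont_on_sphere[OF holo r]]) (use r0 in \<open>auto intro!: continuous_intros simp: norm_mult\<close>)
  obtain Mb where Mb: "Mb \<ge> 0" "\<And>w. norm w = r \<Longrightarrow> norm (h w) \<le> Mb"
    using bound_on_circle[OF holo r] by blast
  have HMb: "norm (H \<theta>) \<le> Mb" for \<theta> unfolding H_def using r0 by (intro Mb(2)) (simp add: norm_mult)
  have sc: "summable (\<lambda>n. norm (lc h \<beta> n) * r ^ n)" by (rule lc_summable[OF holo b r])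
  have sd: "summable (\<lambda>n. norm (ld h \<beta> n) / r ^ Suc n)" by (rule ld_summable[OF holo b r])
  define a where "a n \<theta> = lc h \<beta> n * (of_real r * cis \<theta>) ^ n * cnj (H \<theta>)" for n \<theta>
  define d where "d n \<theta> = ld h \<beta> n / (of_real r * cis \<theta>) ^ Suc n * cnj (H \<theta>)" for n \<theta>
  have pw: "(of_real r * cis \<theta>) ^ n = of_real r ^ n * cis (real n * \<theta>)" for n \<theta>
    by (simp only: power_mult_distrib Complex.DeMoivre)
  have na: "norm (lc h \<beta> n * (of_real r * cis \<theta>) ^ n) = norm (lc h \<beta> n) * r ^ n" for n \<theta>
    using r0 by (simp add: norm_mult norm_power)
  have nd: "norm (ld h \<beta> n / (of_real r * cis \<theta>) ^ Suc n) = norm (ld h \<beta> n) / r ^ Suc n" for n \<theta>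
    using r0 by (simp add: norm_mult norm_divide norm_power)
  have IA: "(\<lambda>n. integral {0..2*pi} (a n)) sums integral {0..2*pi} (\<lambda>\<theta>. \<Sum>n. a n \<theta>)"
   and IA': "(\<lambda>\<theta>. \<Sum>n. a n \<theta>) integrable_on {0..2*pi}"
  proof -
    have c1: "continuous_on {0..2*pi} (a n)" for n
      unfolding a_def by (intro continuous_intros cH)
    have b1: "norm (a n \<theta>) \<le> norm (lc h \<beta> n) * r ^ n * Mb" for n \<theta>
      unfolding a_def norm_mult[of _ "cnj _"] na complex_mod_cnj
      using r0 by (intro mult_left_mono HMb) auto
    have s1: "summable (\<lambda>n. norm (lc h \<beta> n) * r ^ n * Mb)"
      by (intro summable_mult2 sc)
    show "(\<lambda>n. integral {0..2*pi} (a n)) sums integral {0..2*pi} (\<lambda>\<theta>. \<Sum>n. a n \<theta>)"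
      by (rule integral_suminf_mtest(1)[OF c1 b1 s1])
    show "(\<lambda>\<theta>. \<Sum>n. a n \<theta>) integrable_on {0..2*pi}"
      by (rule integral_suminf_mtest(2)[OF c1 b1 s1])
  qed
  have ID: "(\<lambda>n. integral {0..2*pi} (d n)) sums integral {0..2*pi} (\<lambda>\<theta>. \<Sum>n. d n \<theta>)"
   and ID': "(\<lambda>\<theta>. \<Sum>n. d n \<theta>) integrable_on {0..2*pi}"
  proof -
    have c1: "continuous_on {0..2*pi} (d n)" for n
      unfolding d_def using r0 by (intro continuous_intros cH) auto
    have b1: "norm (d n \<theta>) \<le> norm (ld h \<beta> n) / r ^ Suc n * Mb" for n \<theta>
      unfolding d_def norm_mult[of _ "cnj _"] nd complex_mod_cnj
      using r0 by (intro mult_left_mono HMb) auto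
    have s1: "summable (\<lambda>n. norm (ld h \<beta> n) / r ^ Suc n * Mb)"
      by (intro summable_mult2 sd)
    show "(\<lambda>n. integral {0..2*pi} (d n)) sums integral {0..2*pi} (\<lambda>\<theta>. \<Sum>n. d n \<theta>)"
      by (rule integral_suminf_mtest(1)[OF c1 b1 s1])
    show "(\<lambda>\<theta>. \<Sum>n. d n \<theta>) integrable_on {0..2*pi}"
      by (rule integral_suminf_mtest(2)[OF c1 b1 s1])
  qed
  have ia: "integral {0..2*pi} (a n) = of_real (2 * pi * (norm (lc h \<beta> n) ^ 2 * r ^ (2 * n)))" for n
  proof -
    have "a n = (\<lambda>\<theta>. (lc h \<beta> n * of_real r ^ n) * cnj (H \<theta> * cis (- (real n * \<theta>))))"
      unfolding a_def pw by (rule ext) (simp add: cis_cnj)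
    then have "integral {0..2*pi} (a n) = (lc h \<beta> n * of_real r ^ n) * cnj (integral {0..2*pi} (\<lambda>\<theta>. H \<theta> * cis (- (real n * \<theta>))))"
      by (simp only: integral_mult_right integral_cnj)
    also have "\<dots> = (lc h \<beta> n * of_real r ^ n) * cnj (2 * pi * r ^ n * lc h \<beta> n)"
      unfolding H_def fourier_lc[OF holo b r] ..
    also have "\<dots> = of_real (2 * pi * r ^ (2 * n)) * (lc h \<beta> n * cnj (lc h \<beta> n))"
      by (simp add: power_mult mult_ac power2_eq_square)
    also have "\<dots> = of_real (2 * pi * (norm (lc h \<beta> n) ^ 2 * r ^ (2 * n)))"
      by (simp flip: complex_norm_square)
    finally show ?thesis .
  qed
  have id: "integral {0..2*pi} (d n) = of_real (2 * pi * (norm (ld h \<beta> n) ^ 2 / r ^ (2 * Suc n)))" for n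
  proof -
    have "d n = (\<lambda>\<theta>. (ld h \<beta> n / of_real r ^ Suc n) * cnj (H \<theta> * cis (real (Suc n) * \<theta>)))"
    proof (rule ext)
      fix \<theta>
      have ci: "cnj (cis (real (Suc n) * \<theta>)) = inverse (cis (real (Suc n) * \<theta>))"
        by (simp add: cis_cnj cis_inverse)
      show "d n \<theta> = (ld h \<beta> n / of_real r ^ Suc n) * cnj (H \<theta> * cis (real (Suc n) * \<theta>))"
        unfolding d_def pw complex_cnj_mult ci by (simp add: field_simps)
    qed
    then have "integral {0..2*pi} (d n) = (ld h \<beta> n / of_real r ^ Suc n) * cnj (integral {0..2*pi} (\<lambda>\<theta>. H \<theta> * cis (real (Suc n) * \<theta>)))"
      by (simp only: integral_mult_right integral_cnj)
    also have "\<dots> = (ld h \<beta> n / of_real r ^ Suc n) * cnj (2 * pi * ld h \<beta> n / r ^ Suc n)"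
      unfolding H_def fourier_ld[OF holo b r] by simp
    also have "\<dots> = of_real (2 * pi / r ^ (2 * Suc n)) * (ld h \<beta> n * cnj (ld h \<beta> n))"
      by (simp add: power_mult mult_ac power2_eq_square)
    also have "\<dots> = of_real (2 * pi * (norm (ld h \<beta> n) ^ 2 / r ^ (2 * Suc n)))"
      by (simp flip: complex_norm_square)
    finally show ?thesis .
  qed
  have ra: "(\<lambda>n. 2 * pi * (norm (lc h \<beta> n) ^ 2 * r ^ (2 * n))) sums Re (integral {0..2*pi} (\<lambda>\<theta>. \<Sum>n. a n \<theta>))"
    using sums_Re[OF IA] by (simp add: ia)
  have rd: "(\<lambda>n. 2 * pi * (norm (ld h \<beta> n) ^ 2 / r ^ (2 * Suc n))) sums Re (integral {0..2*pi} (\<lambda>\<theta>. \<Sum>n. d n \<theta>))"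
    using sums_Re[OF ID] by (simp add: id)
  show s1: "summable (\<lambda>n. norm (lc h \<beta> n) ^ 2 * r ^ (2 * n))"
    using summable_mult[OF sums_summable[OF ra], of "1/(2*pi)"] by simp
  show s2: "summable (\<lambda>n. norm (ld h \<beta> n) ^ 2 / r ^ (2 * Suc n))"
    using summable_mult[OF sums_summable[OF rd], of "1/(2*pi)"] by simp
  have Ia: "integral {0..2*pi} (\<lambda>\<theta>. \<Sum>n. a n \<theta>) = of_real (2 * pi * (\<Sum>n. norm (lc h \<beta> n) ^ 2 * r ^ (2 * n)))"
  proof -
    have "(\<lambda>n. of_real (2 * pi * (norm (lc h \<beta> n) ^ 2 * r ^ (2 * n))) :: complex) sums of_real (2 * pi * (\<Sum>n. norm (lc h \<beta> n) ^ 2 * r ^ (2 * n)))"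
      unfolding sums_of_real_iff by (intro sums_mult summable_sums s1)
    then show ?thesis using IA by (simp add: ia sums_unique2)
  qed
  have Id: "integral {0..2*pi} (\<lambda>\<theta>. \<Sum>n. d n \<theta>) = of_real (2 * pi * (\<Sum>n. norm (ld h \<beta> n) ^ 2 / r ^ (2 * Suc n)))"
  proof -
    have "(\<lambda>n. of_real (2 * pi * (norm (ld h \<beta> n) ^ 2 / r ^ (2 * Suc n))) :: complex) sums of_real (2 * pi * (\<Sum>n. norm (ld h \<beta> n) ^ 2 / r ^ (2 * Suc n)))"
      unfolding sums_of_real_iff by (intro sums_mult summable_sums s2)
    then show ?thesis using ID by (simp add: id sums_unique2)
  qed
  have prod: "H \<theta> * cnj (H \<theta>) = (\<Sum>n. a n \<theta>) + (\<Sum>n. d n \<theta>)" for \<theta>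
  proof -
    have s1: "summable (\<lambda>n. lc h \<beta> n * (of_real r * cis \<theta>) ^ n)"
      by (rule summable_norm_cancel) (simp only: na sc)
    have s2: "summable (\<lambda>n. ld h \<beta> n / (of_real r * cis \<theta>) ^ Suc n)"
      by (rule summable_norm_cancel) (simp only: nd sd)
    have "H \<theta> = (\<Sum>n. lc h \<beta> n * (of_real r * cis \<theta>) ^ n) + (\<Sum>n. ld h \<beta> n / (of_real r * cis \<theta>) ^ Suc n)"
      unfolding H_def by (rule laurent_expansion[OF holo b inA])
    then have "H \<theta> * cnj (H \<theta>) = (\<Sum>n. lc h \<beta> n * (of_real r * cis \<theta>) ^ n) * cnj (H \<theta>) + (\<Sum>n. ld h \<beta> n / (of_real r * cis \<theta>) ^ Suc n) * cnj (H \<theta>)"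
      by (simp add: distrib_right)
    also have "\<dots> = (\<Sum>n. a n \<theta>) + (\<Sum>n. d n \<theta>)"
      unfolding a_def d_def by (simp only: suminf_mult2[OF s1] suminf_mult2[OF s2])
    finally show ?thesis .
  qed
  have "((\<lambda>\<theta>. H \<theta> * cnj (H \<theta>)) has_integral (integral {0..2*pi} (\<lambda>\<theta>. \<Sum>n. a n \<theta>) + integral {0..2*pi} (\<lambda>\<theta>. \<Sum>n. d n \<theta>))) {0..2*pi}"
    unfolding prod by (intro has_integral_add integrable_integral IA' ID')
  from has_integral_Re[OF this[unfolded Ia Id]]
  have "((\<lambda>\<theta>. norm (H \<theta>) ^ 2) has_integral (2 * pi * ((\<Sum>n. norm (lc h \<beta> n) ^ 2 * r ^ (2 * n)) + (\<Sum>n. norm (ld h \<beta> n) ^ 2 / r ^ (2 * Suc n))))) {0..2*pi}"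
    by (simp add: algebra_simps flip: complex_norm_square)
  then show "integral {0..2*pi} (\<lambda>\<theta>. norm (h (of_real r * cis \<theta>)) ^ 2) =
         2 * pi * ((\<Sum>n. norm (lc h \<beta> n) ^ 2 * r ^ (2 * n)) + (\<Sum>n. norm (ld h \<beta> n) ^ 2 / r ^ (2 * Suc n)))"
    unfolding H_def by (rule integral_unique)
qed

lemma diffquot_continuous:
  fixes f :: "complex \<Rightarrow> complex"
  assumes holf: "f holomorphic_on U" and "open U"
  shows "continuous_on (U \<times> U) (\<lambda>(x,y). if y = x then deriv f x else (f y - f x) / (y - x))"
proof -
  have conf: "continuous_on U f" by (rule holomorphic_on_imp_continuous_on[OF holf])
  have con_ff: "continuous (at (x,z)) (\<lambda>(x,y). (f y - f x) / (y-x))"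
               if "x \<in> U" "z \<in> U" "x \<noteq> z" for x z
    using that conf
    apply (simp add: split_def continuous_on_eq_continuous_at \<open>open U\<close>)
    apply (simp | rule continuous_intros continuous_within_compose2 [where g=f])+
    done
  have con_fstsnd: "continuous_on UNIV (\<lambda>x. (fst x - snd x) ::complex)"
    by (rule continuous_intros)+
  have open_uu_Id: "open (U \<times> U - Id)"
  proof (rule open_Diff)
    show "open (U \<times> U)"
      by (simp add: open_Times \<open>open U\<close>)
    show "closed (Id :: complex rel)"
      using continuous_closed_preimage_constant [OF con_fstsnd closed_UNIV, of 0]
      by (auto simp: Id_fstsnd_eq algebra_simps)
  qed
  have con_derf: "continuous (at z) (deriv f)" if "z \<in> U" for z
    by (meson analytic_at analytic_at_imp_isCont assms(1) holf holomorphic_deriv that \<open>open U\<close>)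
  have tendsto_f': "((\<lambda>(x,y). if y = x then deriv f (x)
                              else (f (y) - f (x)) / (y-x)) \<longlongrightarrow> deriv f x)
                    (at (x, x) within U \<times> U)" if "x \<in> U" for x
  proof (rule Lim_withinI)
    fix e::real assume "0 < e"
    obtain k1 where "k1>0" and k1: "\<And>x'. norm (x' - x) \<le> k1 \<Longrightarrow> norm (deriv f x' - deriv f x) < e"
      using \<open>0 < e\<close> continuous_within_E [OF con_derf [OF \<open>x \<in> U\<close>]]
      by (metis UNIV_I dist_norm)
    obtain k2 where "k2>0" and k2: "ball x k2 \<subseteq> U"
      by (blast intro: openE [OF \<open>open U\<close>] \<open>x \<in> U\<close>)
    have neq: "norm ((f z' - f x') / (z' - x') - deriv f x) \<le> e"
                  if "z' \<noteq> x'" and less_k1: "norm (x'-x, z'-x) < k1" and less_k2: "norm (x'-x, z'-x) < k2"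
               for x' z'
    proof -
      have cs_less: "w \<in> closed_segment x' z' \<Longrightarrow> cmod (w-x) \<le> norm (x'-x, z'-x)" for w
        using segment_furthest_le [of w x' z' x]
        by (metis (no_types) dist_commute dist_norm norm_fst_le norm_snd_le order_trans)
      have derf_le: "w \<in> closed_segment x' z' \<Longrightarrow> z' \<noteq> x' \<Longrightarrow> cmod (deriv f w - deriv f x) \<le> e" for w
        by (blast intro: cs_less less_k1 k1 [unfolded divide_const_simps dist_norm] less_imp_le le_less_trans)
      have f_has_der: "\<And>x. x \<in> U \<Longrightarrow> (f has_field_derivative deriv f x) (at x within U)"
        by (metis DERIV_deriv_iff_field_differentiable at_within_open holf holomorphic_on_def \<open>open U\<close>)
      have "closed_segment x' z' \<subseteq> U"
        by (rule order_trans [OF _ k2]) (simp add: cs_less  le_less_trans [OF _ less_k2] dist_complex_def norm_minus_commute subset_iff)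
      then have cint_derf: "(deriv f has_contour_integral f z' - f x') (linepath x' z')"
        using contour_integral_primitive [OF f_has_der valid_path_linepath] by simp
      then have *: "((\<lambda>x. deriv f x / (z' - x')) has_contour_integral (f z' - f x') / (z' - x')) (linepath x' z')"
        by (rule has_contour_integral_div)
      have "norm ((f z' - f x') / (z' - x') - deriv f x) \<le> e/norm(z' - x') * norm(z' - x')"
        apply (rule has_contour_integral_bound_linepath [OF has_contour_integral_diff [OF *]])
        using has_contour_integral_div [where c = "z' - x'", OF has_contour_integral_const_linepath [of "deriv f x" z' x']]
               \<open>e > 0\<close>  \<open>z' \<noteq> x'\<close>
        apply (auto simp: norm_divide divide_simps derf_le)
        done
      also have "\<dots> \<le> e" using \<open>0 < e\<close> by simp
      finally show ?thesis .
    qed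
    show "\<exists>d>0. \<forall>xa\<in>U \<times> U.
                0 < dist xa (x, x) \<and> dist xa (x, x) < d \<longrightarrow>
                dist (case xa of (x, y) \<Rightarrow> if y = x then deriv f x else (f y - f x) / (y-x)) (deriv f x) \<le> e"
      apply (rule_tac x="min k1 k2" in exI)
      using \<open>k1>0\<close> \<open>k2>0\<close> \<open>e>0\<close>
      by (force simp: dist_norm neq intro: dual_order.strict_trans2 k1 less_imp_le norm_fst_le)
  qed
  have "\<And>x y. \<lbrakk>x \<in> U; y \<in> U; y \<noteq> x\<rbrakk> \<Longrightarrow> (\<lambda>(x, y). if y = x then deriv f x else (f y - f x) / (y-x)) \<midarrow>(x, y)\<rightarrow> (f y - f x) / (y - x)"
    apply (rule Lim_transform_within_open [OF _ open_uu_Id, where f = "(\<lambda>(x,y). (f y - f x) / (y-x))"])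
    using con_ff by (auto simp: continuous_within)
  then show ?thesis
    unfolding continuous_on_eq_continuous_within continuous_within
    by (fastforce simp add: tendsto_f' intro: Lim_at_imp_Lim_at_within)
qed

lemma annulus_neg: "z \<in> annulus \<beta> \<Longrightarrow> - z \<in> annulus \<beta>"
  by (simp add: annulus_def)

lemma winding_odd:
  fixes f :: "complex \<Rightarrow> complex"
  assumes b: "0 < \<beta>" "\<beta> < 1" and holo: "f holomorphic_on annulus \<beta>" and inj: "inj_on f (annulus \<beta>)"
    and t0: "ln \<beta> < t0" "t0 < 0"
  defines "zt \<equiv> \<lambda>\<tau>::real. exp (of_real t0 + 2 * pi * \<i> * of_real \<tau>)"
  shows "\<exists>m::int. winding_number (\<lambda>\<tau>. zt \<tau> * deriv f (zt \<tau>)) 0 = of_int (2 * m + 1)"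
proof -
  have ztA: "zt \<tau> \<in> annulus \<beta>" for \<tau>
  proof -
    have "norm (zt \<tau>) = exp t0" by (simp add: zt_def norm_exp_eq_Re)
    moreover have "exp t0 > \<beta>" using t0 b by (metis exp_less_cancel_iff exp_ln)
    moreover have "exp t0 < 1" using t0 by simp
    ultimately show ?thesis by (simp add: annulus_def)
  qed
  have zt0: "zt \<tau> \<noteq> 0" for \<tau> by (simp add: zt_def)
  have ztc: "continuous_on T zt" for T unfolding zt_def by (intro continuous_intros)
  have zt_half: "zt (\<tau> + 1/2) = - zt \<tau>" for \<tau>
  proof -
    have "zt (\<tau> + 1/2) = exp ((of_real t0 + 2 * pi * \<i> * of_real \<tau>) + of_real pi * \<i>)"
      unfolding zt_def by (rule arg_cong[where f=exp]) (simp add: algebra_simps)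
    also have "\<dots> = zt \<tau> * exp (of_real pi * \<i>)"
      unfolding zt_def by (rule exp_add)
    finally have "zt (\<tau> + 1/2) = zt \<tau> * exp (of_real pi * \<i>)" .
    then show ?thesis by simp
  qed
  have zt_1: "zt 1 = zt 0"
    by (simp add: zt_def exp_add)
  have df0: "deriv f z \<noteq> 0" if "z \<in> annulus \<beta>" for z
    by (rule holomorphic_injective_imp_regular[OF holo open_annulus inj that])
  have fc: "continuous_on (annulus \<beta>) f" by (rule holomorphic_on_imp_continuous_on[OF holo])
  define Kd where "Kd = (\<lambda>(x,y). if y = x then deriv f x else (f y - f x) / (y - x))"
  have Kdc: "continuous_on (annulus \<beta> \<times> annulus \<beta>) Kd"
    unfolding Kd_def by (rule diffquot_continuous[OF holo open_annulus])
  have Kd0: "Kd (x, y) \<noteq> 0" if "x \<in> annulus \<beta>" "y \<in> annulus \<beta>" for x y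
  proof (cases "y = x")
    case True then show ?thesis using df0 that by (simp add: Kd_def)
  next
    case False
    then have "f y \<noteq> f x" using inj that by (meson inj_onD)
    then show ?thesis using False by (simp add: Kd_def)
  qed
  define \<gamma>0 where "\<gamma>0 \<tau> = zt \<tau> * deriv f (zt \<tau>)" for \<tau>
  define \<gamma>1 where "\<gamma>1 \<tau> = (f (zt \<tau>) - f (- zt \<tau>)) / 2" for \<tau>
  define Hm where "Hm p = Kd (zt (snd p), exp (\<i> * of_real pi * of_real (fst p)) * zt (snd p)) * zt (snd p)" for p :: "real \<times> real"
  have rotA: "exp (\<i> * of_real pi * of_real s) * zt \<tau> \<in> annulus \<beta>" for s \<tau>
  proof -
    have "norm (exp (\<i> * of_real pi * of_real s) * zt \<tau>) = norm (zt \<tau>)"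
      by (simp add: norm_mult norm_exp_eq_Re)
    then show ?thesis using ztA[of \<tau>] by (simp add: annulus_def)
  qed
  have hom: "homotopic_loops (- {0}) \<gamma>0 \<gamma>1"
    unfolding homotopic_loops
  proof (intro exI[of _ Hm] conjI ballI)
    have "continuous_on ({0..1} \<times> {0..1}) (\<lambda>p. Kd (zt (snd p), exp (\<i> * of_real pi * of_real (fst p)) * zt (snd p)))"
      by (rule continuous_on_compose2[OF Kdc])
         (auto intro!: continuous_intros ztc[THEN continuous_on_compose2] simp: ztA rotA)
    then show "continuous_on ({0..1} \<times> {0..1}) Hm"
      unfolding Hm_def by (intro continuous_intros ztc[THEN continuous_on_compose2]) auto
    show "Hm \<in> {0..1} \<times> {0..1} \<rightarrow> - {0}"
      using Kd0 ztA rotA zt0 by (auto simp: Hm_def)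
    show "Hm (0, x) = \<gamma>0 x" for x
      by (simp add: Hm_def Kd_def \<gamma>0_def)
    show "Hm (1, x) = \<gamma>1 x" for x
    proof -
      have "exp (\<i> * of_real pi) * zt x = - zt x" by simp
      moreover have "- zt x \<noteq> zt x" using zt0[of x] by simp
      ultimately show ?thesis using zt0[of x]
        by (simp add: Hm_def Kd_def \<gamma>1_def field_simps)
    qed
    show "pathfinish (Hm \<circ> Pair t) = pathstart (Hm \<circ> Pair t)" for t
      by (simp add: pathfinish_def pathstart_def Hm_def zt_1)
  qed
  have w01: "winding_number \<gamma>0 0 = winding_number \<gamma>1 0"
    by (rule winding_number_homotopic_loops[OF hom])
  have p1: "path \<gamma>1"
    unfolding path_def \<gamma>1_def
    by (intro continuous_intros continuous_on_compose2[OF fc] ztc) (auto simp: ztA annulus_neg)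
  have n1: "\<gamma>1 \<tau> \<noteq> 0" for \<tau>
  proof -
    have "- zt \<tau> \<noteq> zt \<tau>" using zt0[of \<tau>] by simp
    then have "f (- zt \<tau>) \<noteq> f (zt \<tau>)" using inj ztA annulus_neg by (meson inj_onD)
    then show ?thesis by (simp add: \<gamma>1_def)
  qed
  then have "0 \<notin> path_image \<gamma>1" by (auto simp: path_image_def)
  from winding_number_as_continuous_log[OF p1 this]
  obtain q1 where q1: "path q1" "pathfinish q1 - pathstart q1 = 2 * of_real pi * \<i> * winding_number \<gamma>1 0"
    "\<And>t. t \<in> {0..1} \<Longrightarrow> \<gamma>1 t = 0 + exp (q1 t)" by blast
  have q1c: "continuous_on {0..1} q1" using q1(1) by (simp add: path_def)
  have g1half: "\<gamma>1 (\<tau> + 1/2) = - \<gamma>1 \<tau>" for \<tau>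
    by (simp only: \<gamma>1_def zt_half minus_minus) (simp add: divide_simps)
  obtain m :: int where m: "\<And>\<tau>. \<tau> \<in> {0..1/2} \<Longrightarrow> q1 (\<tau> + 1/2) = (q1 \<tau> + of_real pi * \<i>) + 2 * pi * \<i> * of_int m"
  proof (rule exp_eq_const_on[of "{0..1/2}" "\<lambda>\<tau>. q1 (\<tau> + 1/2)" "\<lambda>\<tau>. q1 \<tau> + of_real pi * \<i>" 0])
    show "connected {0..1/2::real}" by simp
    show "continuous_on {0..1/2} (\<lambda>\<tau>. q1 (\<tau> + 1/2))"
      by (rule continuous_on_compose2[OF q1c]) (auto intro!: continuous_intros)
    show "continuous_on {0..1/2} (\<lambda>\<tau>. q1 \<tau> + of_real pi * \<i>)"
      by (intro continuous_intros continuous_on_subset[OF q1c]) auto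
    fix \<tau> :: real assume t: "\<tau> \<in> {0..1/2}"
    have "exp (q1 (\<tau> + 1/2)) = \<gamma>1 (\<tau> + 1/2)" using q1(3)[of "\<tau> + 1/2"] t by simp
    also have "\<dots> = - \<gamma>1 \<tau>" by (rule g1half)
    also have "\<dots> = exp (q1 \<tau> + of_real pi * \<i>)" using q1(3)[of \<tau>] t by (simp add: exp_add)
    finally show "exp (q1 (\<tau> + 1/2)) = exp (q1 \<tau> + of_real pi * \<i>)" .
  qed (auto intro: that)
  have "pathfinish q1 - pathstart q1 = (q1 (1/2 + 1/2) - q1 (1/2)) + (q1 (0 + 1/2) - q1 0)"
    by (simp add: pathfinish_def pathstart_def)
  also have "\<dots> = 2 * pi * \<i> * of_int (2 * m + 1)"
    using m[of "1/2"] m[of 0] by (simp add: algebra_simps)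
  finally have "winding_number \<gamma>1 0 = of_int (2 * m + 1)"
    using q1(2) by simp
  then show ?thesis using w01 unfolding \<gamma>0_def by metis
qed

lemma sqrt_recip_deriv:
  fixes f :: "complex \<Rightarrow> complex"
  assumes b: "0 < \<beta>" "\<beta> < 1" and holo: "f holomorphic_on annulus \<beta>" and inj: "inj_on f (annulus \<beta>)"
  obtains h where "h holomorphic_on annulus \<beta>" "\<And>z. z \<in> annulus \<beta> \<Longrightarrow> h z ^ 2 * deriv f z = 1"
proof -
  define S where "S = {w. Re w > ln \<beta>} \<inter> {w. Re w < 0}"
  have oS: "open S" unfolding S_def by (intro open_Int open_halfspace_Re_gt open_halfspace_Re_lt)
  have cS: "convex S" unfolding S_def by (intro convex_Int convex_halfspace_Re_gt convex_halfspace_Re_lt)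
  have conS: "connected S" by (rule convex_connected[OF cS])
  define t0 where "t0 = ln \<beta> / 2"
  have t0: "ln \<beta> < t0" "t0 < 0" using b by (auto simp: t0_def)
  have t0S: "of_real t0 \<in> S" using t0 by (simp add: S_def)
  have expS: "exp w \<in> annulus \<beta>" if "w \<in> S" for w
  proof -
    have "exp (Re w) > exp (ln \<beta>)" using that by (simp add: S_def)
    then have "exp (Re w) > \<beta>" using b by simp
    moreover have "exp (Re w) < 1" using that by (simp add: S_def)
    ultimately show ?thesis by (simp add: annulus_def norm_exp_eq_Re)
  qed
  have shS: "w + 2 * pi * \<i> \<in> S" if "w \<in> S" for w using that by (simp add: S_def)
  have df0: "deriv f z \<noteq> 0" if "z \<in> annulus \<beta>" for z
    by (rule holomorphic_injective_imp_regular[OF holo open_annulus inj that])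
  have hdf: "deriv f holomorphic_on annulus \<beta>" by (rule holomorphic_deriv[OF holo open_annulus])
  define Phi where "Phi w = exp w * deriv f (exp w)" for w
  have hPhi: "Phi holomorphic_on S"
  proof -
    have "(deriv f \<circ> exp) holomorphic_on S"
      by (rule holomorphic_on_compose_gen[OF _ hdf]) (auto intro: holomorphic_intros expS)
    then show ?thesis unfolding Phi_def o_def by (intro holomorphic_intros)
  qed
  have Phi0: "Phi w \<noteq> 0" if "w \<in> S" for w using df0[OF expS[OF that]] by (simp add: Phi_def)
  obtain M where hM: "M holomorphic_on S" and PM: "\<And>w. w \<in> S \<Longrightarrow> Phi w = exp (M w)"
    using contractible_imp_holomorphic_log[OF hPhi convex_imp_contractible[OF cS] Phi0] by blast
  have cM: "continuous_on S M" by (rule holomorphic_on_imp_continuous_on[OF hM])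
  have Phi_per: "Phi (w + 2 * pi * \<i>) = Phi w" for w by (simp add: Phi_def exp_add)
  obtain k :: int where k: "\<And>w. w \<in> S \<Longrightarrow> M (w + 2 * pi * \<i>) = M w + 2 * pi * \<i> * of_int k"
  proof (rule exp_eq_const_on[OF conS _ cM _ t0S])
    show "continuous_on S (\<lambda>w. M (w + 2 * pi * \<i>))"
      by (rule continuous_on_compose2[OF cM]) (auto intro!: continuous_intros simp: S_def)
    show "exp (M (w + 2 * pi * \<i>)) = exp (M w)" if "w \<in> S" for w
      using PM[OF shS[OF that]] PM[OF that] Phi_per[of w] by simp
  qed (auto intro: that)
  \<comment> \<open>k is the winding number, hence odd\<close>
  define zt where "zt = (\<lambda>\<tau>::real. exp (of_real t0 + 2 * pi * \<i> * of_real \<tau>))"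
  define wt where "wt = (\<lambda>\<tau>::real. of_real t0 + 2 * pi * \<i> * of_real \<tau>)"
  have wtS: "wt \<tau> \<in> S" for \<tau> using t0 by (simp add: wt_def S_def)
  obtain m :: int where m: "winding_number (\<lambda>\<tau>. zt \<tau> * deriv f (zt \<tau>)) 0 = of_int (2 * m + 1)"
    using winding_odd[OF b holo inj t0] unfolding zt_def by blast
  define \<gamma>0 where "\<gamma>0 = (\<lambda>\<tau>. zt \<tau> * deriv f (zt \<tau>))"
  have g0: "\<gamma>0 \<tau> = exp (M (wt \<tau>))" for \<tau>
    using PM[OF wtS[of \<tau>]] by (simp add: \<gamma>0_def Phi_def zt_def wt_def)
  have cMw: "continuous_on {0..1} (\<lambda>\<tau>. M (wt \<tau>))"
    by (rule continuous_on_compose2[OF cM]) (use t0 in \<open>auto intro!: continuous_intros simp: wt_def S_def\<close>)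
  have p0: "path \<gamma>0" unfolding path_def g0 by (intro continuous_intros cMw)
  have "0 \<notin> path_image \<gamma>0" by (auto simp: path_image_def g0)
  from winding_number_as_continuous_log[OF p0 this]
  obtain q0 where q0: "path q0" "pathfinish q0 - pathstart q0 = 2 * of_real pi * \<i> * winding_number \<gamma>0 0"
    "\<And>t. t \<in> {0..1} \<Longrightarrow> \<gamma>0 t = 0 + exp (q0 t)" by blast
  obtain n :: int where n: "\<And>\<tau>. \<tau> \<in> {0..1} \<Longrightarrow> M (wt \<tau>) = q0 \<tau> + 2 * pi * \<i> * of_int n"
  proof (rule exp_eq_const_on[of "{0..1}" "\<lambda>\<tau>. M (wt \<tau>)" q0 0])
    show "continuous_on {0..1} q0" using q0(1) by (simp add: path_def)
    show "exp (M (wt \<tau>)) = exp (q0 \<tau>)" if "\<tau> \<in> {0..1}" for \<tau>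
      using q0(3)[OF that] g0[of \<tau>] by simp
  qed (auto intro: that cMw)
  have "M (wt 1) - M (wt 0) = 2 * pi * \<i> * winding_number \<gamma>0 0"
    using n[of 1] n[of 0] q0(2) by (simp add: pathfinish_def pathstart_def)
  moreover have "M (wt 1) = M (wt 0) + 2 * pi * \<i> * of_int k"
    using k[OF wtS[of 0]] by (simp add: wt_def)
  ultimately have "winding_number \<gamma>0 0 = of_int k" by simp
  then have "(of_int k :: complex) = of_int (2 * m + 1)" using m unfolding \<gamma>0_def by simp
  then have kodd: "k = 2 * m + 1" by (simp only: of_int_eq_iff)
  define Q where "Q w = exp ((w - M w) / 2)" for w
  have hQ: "Q holomorphic_on S" unfolding Q_def by (intro holomorphic_intros hM) auto
  have Qper: "Q (w + 2 * pi * \<i>) = Q w" if "w \<in> S" for w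
  proof -
    have Mk: "M (w + 2 * pi * \<i>) = M w + 2 * pi * \<i> * (2 * of_int m + 1)"
      using k[OF that] kodd by simp
    have e: "(w + 2 * pi * \<i> - M (w + 2 * pi * \<i>)) / 2 = (w - M w) / 2 + (2 * of_int (- m) * of_real pi) * \<i>"
      unfolding Mk by (simp add: field_simps)
    have "exp ((2 * of_int (- m) * of_real pi) * \<i>) = 1"
      using exp_integer_2pi[of "of_int (- m)"] by simp
    then show ?thesis unfolding Q_def e exp_add by simp
  qed
  have Qsq: "Q w ^ 2 * deriv f (exp w) = 1" if "w \<in> S" for w
  proof -
    have "Q w ^ 2 = exp (w - M w)" unfolding Q_def by (simp add: power2_eq_square flip: exp_add)
    also have "\<dots> = exp w / exp (M w)" by (simp add: exp_diff)
    also have "\<dots> = exp w / Phi w" using PM[OF that] by simp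
    finally show ?thesis using Phi0[OF that] by (simp add: Phi_def field_simps)
  qed
  have LnS: "Ln z \<in> S" if "z \<in> annulus \<beta>" for z
  proof -
    have z0: "z \<noteq> 0" "norm z > \<beta>" "norm z < 1" using that b by (auto simp: annulus_def)
    then have "ln (norm z) > ln \<beta>" "ln (norm z) < 0" using b by auto
    then show ?thesis using z0 by (simp add: S_def)
  qed
  have Ln2S: "Ln (- z) + of_real pi * \<i> \<in> S" if "z \<in> annulus \<beta>" for z
    using LnS[OF annulus_neg[OF that]] by (simp add: S_def)
  have Qeq: "Q (Ln z) = Q (Ln (- z) + of_real pi * \<i>)" if z: "z \<in> annulus \<beta>" for z
  proof -
    have z0: "z \<noteq> 0" using z b by (auto simp: annulus_def)
    have "exp (Ln z) = exp (Ln (- z) + of_real pi * \<i>)" using z0 by (simp add: exp_add)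
    then obtain j :: int where j: "Ln z = Ln (- z) + of_real pi * \<i> + (of_int (2 * j) * pi) * \<i>"
      using exp_eq by blast
    have "Im (Ln z) = Im (Ln (- z)) + pi + 2 * j * pi" using arg_cong[OF j, of Im] by simp
    moreover have "- pi < Im (Ln z)" "Im (Ln z) \<le> pi" "- pi < Im (Ln (- z))" "Im (Ln (- z)) \<le> pi"
      using mpi_less_Im_Ln Im_Ln_le_pi z0 by auto
    ultimately have "(- 3) * pi < (2 * real_of_int j) * pi" "(2 * real_of_int j) * pi < 1 * pi" by linarith+
    then have "- 3 < 2 * real_of_int j" "2 * real_of_int j < 1"
      using pi_gt_zero mult_less_cancel_right_pos by blast+
    then have "j = 0 \<or> j = -1" by linarith
    then show ?thesis
    proof
      assume "j = 0" then show ?thesis using j by simp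
    next
      assume "j = -1"
      then have "Ln (- z) + of_real pi * \<i> = Ln z + 2 * pi * \<i>" using j by (simp add: algebra_simps)
      then show ?thesis using Qper[OF LnS[OF z]] by (simp only:)
    qed
  qed
  define h where "h z = Q (Ln z)" for z
  show ?thesis
  proof (rule that[of h])
    show "h z ^ 2 * deriv f z = 1" if "z \<in> annulus \<beta>" for z
    proof -
      have z0: "z \<noteq> 0" using that b by (auto simp: annulus_def)
      show ?thesis using Qsq[OF LnS[OF that]] z0 by (simp add: h_def)
    qed
    show "h holomorphic_on annulus \<beta>"
      unfolding holomorphic_on_def
    proof
      fix z assume z: "z \<in> annulus \<beta>"
      have z0: "z \<noteq> 0" using z b by (auto simp: annulus_def)
      have Qd: "Q field_differentiable at w" if "w \<in> S" for w
        using hQ oS that holomorphic_on_imp_differentiable_at by blast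
      show "h field_differentiable at z within annulus \<beta>"
      proof (cases "z \<in> \<real>\<^sub>\<le>\<^sub>0")
        case False
        have "(Q \<circ> Ln) field_differentiable at z"
          by (rule field_differentiable_compose[OF field_differentiable_at_Ln[OF False] Qd[OF LnS[OF z]]])
        then show ?thesis unfolding h_def[abs_def] o_def by (rule field_differentiable_at_within)
      next
        case True
        then have nz: "- z \<notin> \<real>\<^sub>\<le>\<^sub>0" using z0 by (auto simp: nonpos_Reals_def)
        have "((\<lambda>w. Q (w + of_real pi * \<i>)) \<circ> (\<lambda>\<xi>. Ln (- \<xi>))) field_differentiable at z"
        proof (rule field_differentiable_compose)
          have u: "(\<lambda>\<xi>. - \<xi>) field_differentiable at z"
            by (intro derivative_intros)
          have "((\<lambda>x. Ln x) \<circ> (\<lambda>\<xi>. - \<xi>)) field_differentiable at z"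
            by (rule field_differentiable_compose[OF u]) (use field_differentiable_at_Ln[OF nz] in simp)
          then show "(\<lambda>\<xi>. Ln (- \<xi>)) field_differentiable at z" by (simp add: o_def)
          have a: "(\<lambda>w. w + of_real pi * \<i>) field_differentiable at (Ln (- z))"
            by (intro derivative_intros)
          have "(Q \<circ> (\<lambda>w. w + of_real pi * \<i>)) field_differentiable at (Ln (- z))"
            by (rule field_differentiable_compose[OF a]) (use Qd[OF Ln2S[OF z]] in simp)
          then show "(\<lambda>w. Q (w + of_real pi * \<i>)) field_differentiable at (Ln (- z))" by (simp add: o_def)
        qed
        then have "(\<lambda>\<xi>. Q (Ln (- \<xi>) + of_real pi * \<i>)) field_differentiable at z within annulus \<beta>"
          unfolding o_def by (rule field_differentiable_at_within)
        then show ?thesis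
          by (rule field_differentiable_transform_within[OF zero_less_one z, rotated])
             (simp add: h_def Qeq)
      qed
    qed
  qed
qed

definition lamc :: "nat \<Rightarrow> real" where "lamc n = 2 * real n"
definition lamd :: "nat \<Rightarrow> real" where "lamd n = - (2 * real (Suc n))"

lemma exp_pow_conv:
  "exp t ^ (2 * n) = exp (lamc n * t)" "1 / exp t ^ (2 * Suc n) = exp (lamd n * t)"
proof -
  show "exp t ^ (2 * n) = exp (lamc n * t)"
    unfolding lamc_def using exp_of_nat_mult[of "2 * n" t] by (simp add: mult_ac)
  have "exp t ^ (2 * Suc n) = exp (real (2 * Suc n) * t)"
    using exp_of_nat_mult[of "2 * Suc n" t] by simp
  then have "1 / exp t ^ (2 * Suc n) = exp (- (real (2 * Suc n) * t))"
    by (simp only: exp_minus inverse_eq_divide)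
  also have "- (real (2 * Suc n) * t) = lamd n * t"
    unfolding lamd_def by (simp add: algebra_simps)
  finally show "1 / exp t ^ (2 * Suc n) = exp (lamd n * t)" .
qed

lemma A_series:
  assumes b: "0 < \<beta>" "\<beta> < 1" and hh: "h holomorphic_on annulus \<beta>"
    and hf: "\<And>z. z \<in> annulus \<beta> \<Longrightarrow> h z ^ 2 * deriv f z = 1"
    and t: "t \<in> {ln \<beta><..<0}"
  shows "summable (\<lambda>n. \<bar>norm (lc h \<beta> n) ^ 2\<bar> * exp (lamc n * t))"
    and "summable (\<lambda>n. \<bar>norm (ld h \<beta> n) ^ 2\<bar> * exp (lamd n * t))"
    and "A_fun f t = (\<Sum>n. norm (lc h \<beta> n) ^ 2 * exp (lamc n * t)) + (\<Sum>n. norm (ld h \<beta> n) ^ 2 * exp (lamd n * t))"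
proof -
  define r where "r = exp t"
  have r: "\<beta> < r" "r < 1" "r > 0" using t b by (auto simp: r_def) (metis exp_less_cancel_iff exp_ln)
  have P1: "summable (\<lambda>n. norm (lc h \<beta> n) ^ 2 * r ^ (2 * n))" by (rule parseval(1)[OF hh b r(1,2)])
  have P2: "summable (\<lambda>n. norm (ld h \<beta> n) ^ 2 / r ^ (2 * Suc n))" by (rule parseval(2)[OF hh b r(1,2)])
  have e1: "norm (lc h \<beta> n) ^ 2 * r ^ (2 * n) = \<bar>norm (lc h \<beta> n) ^ 2\<bar> * exp (lamc n * t)" for n
    by (simp add: r_def exp_pow_conv)
  have e2: "norm (ld h \<beta> n) ^ 2 / r ^ (2 * Suc n) = \<bar>norm (ld h \<beta> n) ^ 2\<bar> * exp (lamd n * t)" for n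
    unfolding r_def by (subst exp_pow_conv(2)[symmetric]) simp
  show "summable (\<lambda>n. \<bar>norm (lc h \<beta> n) ^ 2\<bar> * exp (lamc n * t))" using P1 unfolding e1 .
  show "summable (\<lambda>n. \<bar>norm (ld h \<beta> n) ^ 2\<bar> * exp (lamd n * t))" using P2 unfolding e2 .
  have inA: "of_real r * cis \<theta> \<in> annulus \<beta>" for \<theta>
    using r by (simp add: annulus_def norm_mult)
  have nd: "1 / norm (deriv f (of_real r * cis \<theta>)) = norm (h (of_real r * cis \<theta>)) ^ 2" for \<theta>
  proof -
    have "norm (h (of_real r * cis \<theta>)) ^ 2 * norm (deriv f (of_real r * cis \<theta>)) = 1"
      using arg_cong[OF hf[OF inA[of \<theta>]], of norm] by (simp add: norm_mult norm_power)
    then have P: "norm (deriv f (of_real r * cis \<theta>)) * norm (h (of_real r * cis \<theta>)) ^ 2 = 1"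
      by (simp only: mult.commute)
    then have "norm (deriv f (of_real r * cis \<theta>)) \<noteq> 0" by auto
    then show ?thesis using P by (simp add: divide_eq_eq mult.commute)
  qed
  have "A_fun f t = (1 / (2 * pi * r)) * integral {0..2*pi} (\<lambda>\<theta>. r * norm (h (of_real r * cis \<theta>)) ^ 2)"
    unfolding A_fun_def r_def[symmetric] nd ..
  also have "\<dots> = (1 / (2 * pi)) * integral {0..2*pi} (\<lambda>\<theta>. norm (h (of_real r * cis \<theta>)) ^ 2)"
    using r by simp
  also have "\<dots> = (\<Sum>n. norm (lc h \<beta> n) ^ 2 * r ^ (2 * n)) + (\<Sum>n. norm (ld h \<beta> n) ^ 2 / r ^ (2 * Suc n))"
    unfolding parseval(3)[OF hh b r(1,2)] by simp
  also have "\<dots> = (\<Sum>n. norm (lc h \<beta> n) ^ 2 * exp (lamc n * t)) + (\<Sum>n. norm (ld h \<beta> n) ^ 2 * exp (lamd n * t))"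
    unfolding e1 e2 by simp
  finally show "A_fun f t = (\<Sum>n. norm (lc h \<beta> n) ^ 2 * exp (lamc n * t)) + (\<Sum>n. norm (ld h \<beta> n) ^ 2 * exp (lamd n * t))" .
qed

lemma summable_from_abs_exp:
  fixes w l :: "nat \<Rightarrow> real"
  assumes "summable (\<lambda>n. \<bar>w n\<bar> * exp (l n * s))"
  shows "summable (\<lambda>n. w n * exp (l n * s))"
  by (rule summable_comparison_test'[OF assms]) (simp add: abs_mult)

lemma B_series:
  assumes b: "0 < \<beta>" "\<beta> < 1" and hh: "h holomorphic_on annulus \<beta>"
    and hf: "\<And>z. z \<in> annulus \<beta> \<Longrightarrow> h z ^ 2 * deriv f z = 1"
    and t: "t \<in> {ln \<beta><..<0}"
  shows "B_fun f t = (\<Sum>n. norm (lc h \<beta> n) ^ 2 * (lamc n * lamc n - 2 * lamc n) * exp (lamc n * t))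
                   + (\<Sum>n. norm (ld h \<beta> n) ^ 2 * (lamd n * lamd n - 2 * lamd n) * exp (lamd n * t))"
    and "summable (\<lambda>n. norm (lc h \<beta> n) ^ 2 * (lamc n * lamc n - 2 * lamc n) * exp (lamc n * t))"
    and "summable (\<lambda>n. norm (ld h \<beta> n) ^ 2 * (lamd n * lamd n - 2 * lamd n) * exp (lamd n * t))"
proof -
  define I where "I = {ln \<beta><..<0::real}"
  have oI: "open I" by (simp add: I_def)
  define wc where "wc n = norm (lc h \<beta> n) ^ 2" for n
  define wd where "wd n = norm (ld h \<beta> n) ^ 2" for n
  have Sc: "\<And>s. s \<in> {ln \<beta><..<0} \<Longrightarrow> summable (\<lambda>n. \<bar>wc n\<bar> * exp (lamc n * s))"
    unfolding wc_def by (rule A_series(1)[OF b hh hf])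
  have Sd: "\<And>s. s \<in> {ln \<beta><..<0} \<Longrightarrow> summable (\<lambda>n. \<bar>wd n\<bar> * exp (lamd n * s))"
    unfolding wd_def by (rule A_series(2)[OF b hh hf])
  have Sc1: "\<And>s. s \<in> {ln \<beta><..<0} \<Longrightarrow> summable (\<lambda>n. \<bar>wc n * lamc n\<bar> * exp (lamc n * s))"
    by (rule expser_summable_deriv[OF Sc])
  have Sd1: "\<And>s. s \<in> {ln \<beta><..<0} \<Longrightarrow> summable (\<lambda>n. \<bar>wd n * lamd n\<bar> * exp (lamd n * s))"
    by (rule expser_summable_deriv[OF Sd])
  have Sc2: "\<And>s. s \<in> {ln \<beta><..<0} \<Longrightarrow> summable (\<lambda>n. \<bar>wc n * lamc n * lamc n\<bar> * exp (lamc n * s))"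
    by (rule expser_summable_deriv[OF Sc1])
  have Sd2: "\<And>s. s \<in> {ln \<beta><..<0} \<Longrightarrow> summable (\<lambda>n. \<bar>wd n * lamd n * lamd n\<bar> * exp (lamd n * s))"
    by (rule expser_summable_deriv[OF Sd1])
  define A0 where "A0 s = (\<Sum>n. wc n * exp (lamc n * s)) + (\<Sum>n. wd n * exp (lamd n * s))" for s
  define A1 where "A1 s = (\<Sum>n. wc n * lamc n * exp (lamc n * s)) + (\<Sum>n. wd n * lamd n * exp (lamd n * s))" for s
  define A2 where "A2 s = (\<Sum>n. wc n * lamc n * lamc n * exp (lamc n * s)) + (\<Sum>n. wd n * lamd n * lamd n * exp (lamd n * s))" for s
  have D0: "(A0 has_real_derivative A1 s) (at s)" if "s \<in> I" for s
  proof -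
    have sI: "s \<in> {ln \<beta><..<0}" using that by (simp add: I_def)
    show ?thesis unfolding A0_def[abs_def] A1_def by (rule DERIV_add[OF expser_has_deriv[OF Sc sI] expser_has_deriv[OF Sd sI]])
  qed
  have D1: "(A1 has_real_derivative A2 s) (at s)" if "s \<in> I" for s
  proof -
    have sI: "s \<in> {ln \<beta><..<0}" using that by (simp add: I_def)
    show ?thesis unfolding A1_def[abs_def] A2_def by (rule DERIV_add[OF expser_has_deriv[OF Sc1 sI] expser_has_deriv[OF Sd1 sI]])
  qed
  have AA0: "A_fun f s = A0 s" if "s \<in> I" for s
  proof -
    have sI: "s \<in> {ln \<beta><..<0}" using that by (simp add: I_def)
    show ?thesis unfolding A0_def wc_def wd_def by (rule A_series(3)[OF b hh hf sI])
  qed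
  have dA: "deriv (A_fun f) s = A1 s" if "s \<in> I" for s
    by (rule DERIV_imp_deriv, rule has_field_derivative_transform_within_open[OF D0[OF that] oI that]) (simp add: AA0)
  have ddA: "deriv (deriv (A_fun f)) s = A2 s" if "s \<in> I" for s
    by (rule DERIV_imp_deriv, rule has_field_derivative_transform_within_open[OF D1[OF that] oI that]) (simp add: dA)
  have tI: "t \<in> I" using t by (simp add: I_def)
  have s1: "summable (\<lambda>n. wc n * lamc n * exp (lamc n * t))"
    using summable_from_abs_exp[OF Sc1[OF t]] .
  have s2: "summable (\<lambda>n. wc n * lamc n * lamc n * exp (lamc n * t))"
    using summable_from_abs_exp[OF Sc2[OF t]] .
  have s3: "summable (\<lambda>n. wd n * lamd n * exp (lamd n * t))"
    using summable_from_abs_exp[OF Sd1[OF t]] .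
  have s4: "summable (\<lambda>n. wd n * lamd n * lamd n * exp (lamd n * t))"
    using summable_from_abs_exp[OF Sd2[OF t]] .
  have ec: "(\<lambda>n. wc n * (lamc n * lamc n - 2 * lamc n) * exp (lamc n * t))
      = (\<lambda>n. wc n * lamc n * lamc n * exp (lamc n * t) - 2 * (wc n * lamc n * exp (lamc n * t)))"
    by (auto simp: algebra_simps)
  have ed: "(\<lambda>n. wd n * (lamd n * lamd n - 2 * lamd n) * exp (lamd n * t))
      = (\<lambda>n. wd n * lamd n * lamd n * exp (lamd n * t) - 2 * (wd n * lamd n * exp (lamd n * t)))"
    by (auto simp: algebra_simps)
  show "summable (\<lambda>n. norm (lc h \<beta> n) ^ 2 * (lamc n * lamc n - 2 * lamc n) * exp (lamc n * t))"
  proof -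
    have "summable (\<lambda>n. wc n * (lamc n * lamc n - 2 * lamc n) * exp (lamc n * t))"
      using summable_diff[OF s2 summable_mult[OF s1, of 2]] unfolding ec[symmetric] .
    then show ?thesis by (simp only: wc_def)
  qed
  show "summable (\<lambda>n. norm (ld h \<beta> n) ^ 2 * (lamd n * lamd n - 2 * lamd n) * exp (lamd n * t))"
  proof -
    have "summable (\<lambda>n. wd n * (lamd n * lamd n - 2 * lamd n) * exp (lamd n * t))"
      using summable_diff[OF s4 summable_mult[OF s3, of 2]] unfolding ed[symmetric] .
    then show ?thesis by (simp only: wd_def)
  qed
  have "B_fun f t = A2 t - 2 * A1 t"
    unfolding B_fun_def ddA[OF tI] dA[OF tI] ..
  also have "\<dots> = (\<Sum>n. wc n * (lamc n * lamc n - 2 * lamc n) * exp (lamc n * t))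
                   + (\<Sum>n. wd n * (lamd n * lamd n - 2 * lamd n) * exp (lamd n * t))"
  proof -
    have X1: "(\<Sum>n. wc n * lamc n * lamc n * exp (lamc n * t) - 2 * (wc n * lamc n * exp (lamc n * t)))
        = (\<Sum>n. wc n * lamc n * lamc n * exp (lamc n * t)) - 2 * (\<Sum>n. wc n * lamc n * exp (lamc n * t))"
      by (simp only: suminf_diff[OF s2 summable_mult[OF s1, of 2], symmetric] suminf_mult[OF s1])
    have X2: "(\<Sum>n. wd n * lamd n * lamd n * exp (lamd n * t) - 2 * (wd n * lamd n * exp (lamd n * t)))
        = (\<Sum>n. wd n * lamd n * lamd n * exp (lamd n * t)) - 2 * (\<Sum>n. wd n * lamd n * exp (lamd n * t))"
      by (simp only: suminf_diff[OF s4 summable_mult[OF s3, of 2], symmetric] suminf_mult[OF s3])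
    show ?thesis unfolding ec ed X1 X2 A1_def A2_def by (simp add: algebra_simps)
  qed
  finally show "B_fun f t = (\<Sum>n. norm (lc h \<beta> n) ^ 2 * (lamc n * lamc n - 2 * lamc n) * exp (lamc n * t))
                   + (\<Sum>n. norm (ld h \<beta> n) ^ 2 * (lamd n * lamd n - 2 * lamd n) * exp (lamd n * t))"
    unfolding wc_def wd_def .
qed

lemma coefc_nonneg: "lamc n * lamc n - 2 * lamc n \<ge> 0"
proof -
  have "0 \<le> real n * (real n - 1)" by (cases n) auto
  moreover have "lamc n * lamc n - 2 * lamc n = 4 * (real n * (real n - 1))"
    by (simp add: lamc_def algebra_simps)
  ultimately show ?thesis by simp
qed

lemma coefc_pos: "n \<ge> 2 \<Longrightarrow> lamc n * lamc n - 2 * lamc n > 0"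
proof -
  assume "n \<ge> 2"
  then have "real n \<ge> 2" by simp
  then have "0 < real n * (real n - 1)" by (intro mult_pos_pos) auto
  moreover have "lamc n * lamc n - 2 * lamc n = 4 * (real n * (real n - 1))"
    by (simp add: lamc_def algebra_simps)
  ultimately show ?thesis by simp
qed

lemma coefc_01: "n < 2 \<Longrightarrow> lamc n * lamc n - 2 * lamc n = 0"
proof -
  assume "n < 2"
  then have "n = 0 \<or> n = 1" by auto
  then show ?thesis by (auto simp: lamc_def)
qed

lemma coefd_pos: "lamd n * lamd n - 2 * lamd n > 0"
proof -
  have "0 < real (Suc n) * (real (Suc n) + 1)" by (intro mult_pos_pos) auto
  moreover have "lamd n * lamd n - 2 * lamd n = 4 * (real (Suc n) * (real (Suc n) + 1))"
    by (simp add: lamd_def algebra_simps)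
  ultimately show ?thesis by simp
qed

theorem proposition4p2:
  fixes f :: "complex \<Rightarrow> complex" and \<beta> :: real
  assumes "0 < \<beta>" "\<beta> < 1"
    and "f holomorphic_on annulus \<beta>"
    and "inj_on f (annulus \<beta>)"
    and "bounded (f ` annulus \<beta>)"
  shows "(\<forall>t\<in>{ln \<beta><..<0}. B_fun f t \<ge> 0)
    \<and> (((\<exists>t0\<in>{ln \<beta><..<0}. B_fun f t0 = 0) \<or> (B_fun f \<longlongrightarrow> 0) (at_left 0)) \<longrightarrow>
        (\<forall>t\<in>{ln \<beta><..<0}. B_fun f t = 0) \<and>
        ((\<exists>C1 C2. \<forall>z\<in>annulus \<beta>. f z = C1 + C2 * z) \<or>
         (\<exists>C1 C2 C3. \<forall>z\<in>annulus \<beta>. z + C3 \<noteq> 0 \<and> f z = C1 + C2 / (z + C3))))"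
proof -
  have b: "0 < \<beta>" "\<beta> < 1" using assms by auto
  obtain h where hh: "h holomorphic_on annulus \<beta>" and hf: "\<And>z. z \<in> annulus \<beta> \<Longrightarrow> h z ^ 2 * deriv f z = 1"
    using sqrt_recip_deriv[OF assms(1,2,3,4)] by blast
  define I where "I = {ln \<beta><..<0::real}"
  define Tc where "Tc n t = norm (lc h \<beta> n) ^ 2 * (lamc n * lamc n - 2 * lamc n) * exp (lamc n * t)" for n t
  define Td where "Td n t = norm (ld h \<beta> n) ^ 2 * (lamd n * lamd n - 2 * lamd n) * exp (lamd n * t)" for n t
  have BB: "B_fun f t = (\<Sum>n. Tc n t) + (\<Sum>n. Td n t)" if "t \<in> I" for t
  proof -
    have tI: "t \<in> {ln \<beta><..<0}" using that by (simp add: I_def)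
    show ?thesis unfolding Tc_def Td_def by (rule B_series(1)[OF b hh hf tI])
  qed
  have sTc: "summable (\<lambda>n. Tc n t)" if "t \<in> I" for t
  proof -
    have tI: "t \<in> {ln \<beta><..<0}" using that by (simp add: I_def)
    show ?thesis unfolding Tc_def by (rule B_series(2)[OF b hh hf tI])
  qed
  have sTd: "summable (\<lambda>n. Td n t)" if "t \<in> I" for t
  proof -
    have tI: "t \<in> {ln \<beta><..<0}" using that by (simp add: I_def)
    show ?thesis unfolding Td_def by (rule B_series(3)[OF b hh hf tI])
  qed
  have Tc0: "Tc n t \<ge> 0" for n t unfolding Tc_def by (intro mult_nonneg_nonneg coefc_nonneg) auto
  have Td0: "Td n t \<ge> 0" for n t unfolding Td_def using coefd_pos[of n] by (intro mult_nonneg_nonneg) auto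
  have Bc0: "(\<Sum>n. Tc n t) \<ge> 0" if "t \<in> I" for t by (rule suminf_nonneg[OF sTc[OF that] Tc0])
  have Bd0: "(\<Sum>n. Td n t) \<ge> 0" if "t \<in> I" for t by (rule suminf_nonneg[OF sTd[OF that] Td0])
  have part1: "\<forall>t\<in>{ln \<beta><..<0}. B_fun f t \<ge> 0"
    using BB Bc0 Bd0 unfolding I_def by fastforce
  have Tc_le: "Tc n t \<le> B_fun f t" if "t \<in> I" for n t
  proof -
    have "Tc n t = sum (\<lambda>n. Tc n t) {n}" by simp
    also have "\<dots> \<le> (\<Sum>n. Tc n t)" by (rule sum_le_suminf[OF sTc[OF that]]) (auto intro: Tc0)
    finally show ?thesis using BB[OF that] Bd0[OF that] by linarith
  qed
  have Td_le: "Td n t \<le> B_fun f t" if "t \<in> I" for n t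
  proof -
    have "Td n t = sum (\<lambda>n. Td n t) {n}" by simp
    also have "\<dots> \<le> (\<Sum>n. Td n t)" by (rule sum_le_suminf[OF sTd[OF that]]) (auto intro: Td0)
    finally show ?thesis using BB[OF that] Bc0[OF that] by linarith
  qed
  have key: "(\<forall>n\<ge>2. lc h \<beta> n = 0) \<and> (\<forall>n. ld h \<beta> n = 0)"
    if hyp: "(\<exists>t0\<in>{ln \<beta><..<0}. B_fun f t0 = 0) \<or> (B_fun f \<longlongrightarrow> 0) (at_left 0)"
  proof -
    have ex: "(\<exists>s. Tc n s \<le> 0) \<and> (\<exists>s. Td n s \<le> 0)" for n
      using hyp
    proof
      assume "\<exists>t0\<in>{ln \<beta><..<0}. B_fun f t0 = 0"
      then obtain t0 where t0: "t0 \<in> I" "B_fun f t0 = 0" unfolding I_def by blast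
      show ?thesis using Tc_le[OF t0(1), of n] Td_le[OF t0(1), of n] t0(2) by auto
    next
      assume lim: "(B_fun f \<longlongrightarrow> 0) (at_left 0)"
      have evI: "eventually (\<lambda>t. t \<in> I) (at_left (0::real))"
        unfolding I_def using b by (intro eventually_at_left_real) simp
      have "Tc n 0 \<le> 0"
      proof (rule tendsto_le[OF trivial_limit_at_left_real lim])
        show "((\<lambda>t. Tc n t) \<longlongrightarrow> Tc n 0) (at_left 0)"
          unfolding Tc_def by (intro tendsto_intros)
        show "eventually (\<lambda>t. Tc n t \<le> B_fun f t) (at_left 0)"
          using evI by eventually_elim (rule Tc_le)
      qed
      moreover have "Td n 0 \<le> 0"
      proof (rule tendsto_le[OF trivial_limit_at_left_real lim])
        show "((\<lambda>t. Td n t) \<longlongrightarrow> Td n 0) (at_left 0)"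
          unfolding Td_def by (intro tendsto_intros)
        show "eventually (\<lambda>t. Td n t \<le> B_fun f t) (at_left 0)"
          using evI by eventually_elim (rule Td_le)
      qed
      ultimately show ?thesis by blast
    qed
    show ?thesis
    proof (intro conjI allI impI)
      fix n :: nat assume n: "n \<ge> 2"
      obtain s where s: "Tc n s \<le> 0" using ex by blast
      have "norm (lc h \<beta> n) ^ 2 * (lamc n * lamc n - 2 * lamc n) \<le> 0"
        using s unfolding Tc_def by (simp add: mult_le_0_iff)
      then have "norm (lc h \<beta> n) ^ 2 \<le> 0" using coefc_pos[OF n] by (simp add: mult_le_0_iff)
      then show "lc h \<beta> n = 0" by simp
    next
      fix n :: nat
      obtain s where s: "Td n s \<le> 0" using ex by blast
      have "norm (ld h \<beta> n) ^ 2 * (lamd n * lamd n - 2 * lamd n) \<le> 0"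
        using s unfolding Td_def by (simp add: mult_le_0_iff)
      then have "norm (ld h \<beta> n) ^ 2 \<le> 0" using coefd_pos[of n] by (simp add: mult_le_0_iff)
      then show "ld h \<beta> n = 0" by simp
    qed
  qed
  have part2: "((\<exists>t0\<in>{ln \<beta><..<0}. B_fun f t0 = 0) \<or> (B_fun f \<longlongrightarrow> 0) (at_left 0)) \<longrightarrow>
        (\<forall>t\<in>{ln \<beta><..<0}. B_fun f t = 0) \<and>
        ((\<exists>C1 C2. \<forall>z\<in>annulus \<beta>. f z = C1 + C2 * z) \<or>
         (\<exists>C1 C2 C3. \<forall>z\<in>annulus \<beta>. z + C3 \<noteq> 0 \<and> f z = C1 + C2 / (z + C3)))"
  proof
    assume hyp: "(\<exists>t0\<in>{ln \<beta><..<0}. B_fun f t0 = 0) \<or> (B_fun f \<longlongrightarrow> 0) (at_left 0)"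
    have kc: "\<And>n. n \<ge> 2 \<Longrightarrow> lc h \<beta> n = 0" and kd: "\<And>n. ld h \<beta> n = 0"
      using key[OF hyp] by auto
    have Bzero: "\<forall>t\<in>{ln \<beta><..<0}. B_fun f t = 0"
    proof
      fix t assume t: "t \<in> {ln \<beta><..<0}"
      then have tI: "t \<in> I" by (simp add: I_def)
      have z1: "(\<lambda>n. Tc n t) = (\<lambda>n. 0)"
      proof
        fix n show "Tc n t = 0"
        proof (cases "n < 2")
          case True then show ?thesis by (simp add: Tc_def coefc_01)
        next
          case False then show ?thesis by (simp add: Tc_def kc)
        qed
      qed
      have z2: "(\<lambda>n. Td n t) = (\<lambda>n. 0)" by (rule ext) (simp add: Td_def kd)
      show "B_fun f t = 0" using BB[OF tI] unfolding z1 z2 by simp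
    qed
    define c0 where "c0 = lc h \<beta> 0"
    define c1 where "c1 = lc h \<beta> 1"
    have hz: "h z = c0 + c1 * z" if z: "z \<in> annulus \<beta>" for z
    proof -
      have "(\<Sum>n. lc h \<beta> n * z ^ n) = (\<Sum>n\<in>{0,1}. lc h \<beta> n * z ^ n)"
        by (rule suminf_finite) (auto simp: kc)
      also have "\<dots> = c0 + c1 * z" by (simp add: c0_def c1_def)
      finally have "(\<Sum>n. lc h \<beta> n * z ^ n) = c0 + c1 * z" .
      moreover have "(\<Sum>n. ld h \<beta> n / z ^ Suc n) = 0" by (simp add: kd)
      ultimately show ?thesis using laurent_expansion[OF hh b z] by simp
    qed
    have fd: "deriv f z = 1 / (c0 + c1 * z) ^ 2" and hnz: "c0 + c1 * z \<noteq> 0" if z: "z \<in> annulus \<beta>" for z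
    proof -
      have e: "(c0 + c1 * z) ^ 2 * deriv f z = 1" using hf[OF z] hz[OF z] by simp
      then show "c0 + c1 * z \<noteq> 0" by auto
      then show "deriv f z = 1 / (c0 + c1 * z) ^ 2" using e by (simp add: field_simps)
    qed
    have conA: "connected (annulus \<beta>)"
    proof -
      have "annulus \<beta> = {x. \<beta> < norm (x - 0) \<and> norm (x - 0) < (1::real)}" by (simp add: annulus_def)
      moreover have "connected {x::complex. \<beta> < norm (x - 0) \<and> norm (x - 0) < 1}"
        by (rule connected_annulus(1)) simp
      ultimately show ?thesis by simp
    qed
    have fder: "(f has_field_derivative deriv f z) (at z)" if "z \<in> annulus \<beta>" for z
      by (rule holomorphic_derivI[OF assms(3) open_annulus that])
    have contf: "continuous_on (annulus \<beta>) f" by (rule holomorphic_on_imp_continuous_on[OF assms(3)])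
    have pt: "of_real ((\<beta> + 1) / 2) \<in> annulus \<beta>" using b by (simp add: annulus_def)
    have concl: "(\<exists>C1 C2. \<forall>z\<in>annulus \<beta>. f z = C1 + C2 * z) \<or>
         (\<exists>C1 C2 C3. \<forall>z\<in>annulus \<beta>. z + C3 \<noteq> 0 \<and> f z = C1 + C2 / (z + C3))"
    proof (cases "c1 = 0")
      case True
      then have c00: "c0 \<noteq> 0" using hnz[OF pt] by simp
      define k where "k = 1 / c0 ^ 2"
      define g where "g z = f z - k * z" for z
      have "continuous_on (annulus \<beta>) g" unfolding g_def by (intro continuous_intros contf)
      moreover have "\<forall>z\<in>annulus \<beta> - {}. (g has_field_derivative 0) (at z)"
      proof
        fix z assume z: "z \<in> annulus \<beta> - {}"
        have "(g has_field_derivative (deriv f z - k)) (at z)"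
          unfolding g_def[abs_def] using z by (auto intro!: derivative_eq_intros fder)
        moreover have "deriv f z - k = 0" using fd z True by (simp add: k_def)
        ultimately show "(g has_field_derivative 0) (at z)" by simp
      qed
      ultimately obtain C where C: "\<And>z. z \<in> annulus \<beta> \<Longrightarrow> g z = C"
        using DERIV_zero_connected_constant[OF conA open_annulus finite.emptyI] by blast
      have "\<forall>z\<in>annulus \<beta>. f z = C + k * z"
        using C by (auto simp: g_def algebra_simps)
      then show ?thesis by blast
    next
      case False
      define C3 where "C3 = c0 / c1"
      have lin: "c0 + c1 * z = c1 * (z + C3)" for z using False by (simp add: C3_def field_simps)
      have zC: "z + C3 \<noteq> 0" if "z \<in> annulus \<beta>" for z using hnz[OF that] lin[of z] by auto
      define g where "g z = f z + 1 / (c1 ^ 2 * (z + C3))" for z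
      have "continuous_on (annulus \<beta>) g" unfolding g_def
        using zC False by (intro continuous_intros contf) auto
      moreover have "\<forall>z\<in>annulus \<beta> - {}. (g has_field_derivative 0) (at z)"
      proof
        fix z assume z: "z \<in> annulus \<beta> - {}"
        have z3: "z + C3 \<noteq> 0" using zC z by auto
        have zA: "z \<in> annulus \<beta>" using z by simp
        define q where "q = c1 ^ 2"
        have q0: "q \<noteq> 0" using False by (simp add: q_def)
        have d1: "((\<lambda>z. 1 / (q * (z + C3))) has_field_derivative (- 1 / (q * (z + C3) ^ 2))) (at z)"
        proof -
          have e: "(\<lambda>z. 1 / (q * (z + C3))) = (\<lambda>z. (1/q) * inverse (z + C3))" by (auto simp: field_simps)
          have "((\<lambda>z. (1/q) * inverse (z + C3)) has_field_derivative ((1/q) * (- (inverse (z + C3) * 1 * inverse (z + C3))))) (at z)"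
            using z3 by (intro DERIV_cmult DERIV_inverse_fun derivative_eq_intros) auto
          moreover have "(1/q) * (- (inverse (z + C3) * 1 * inverse (z + C3))) = - 1 / (q * (z + C3) ^ 2)"
            using z3 q0 by (simp add: field_simps power2_eq_square)
          ultimately show ?thesis unfolding e by simp
        qed
        have "(g has_field_derivative (deriv f z + - 1 / (q * (z + C3) ^ 2))) (at z)"
          unfolding g_def[abs_def] q_def[symmetric] by (rule DERIV_add[OF fder[OF zA] d1])
        then have "(g has_field_derivative (deriv f z - 1 / (c1 ^ 2 * (z + C3) ^ 2))) (at z)"
          by (simp add: q_def)
        moreover have "deriv f z = 1 / (c1 ^ 2 * (z + C3) ^ 2)"
          using fd[of z] z lin[of z] by (simp add: power_mult_distrib)
        ultimately show "(g has_field_derivative 0) (at z)" by simp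
      qed
      ultimately obtain C where C: "\<And>z. z \<in> annulus \<beta> \<Longrightarrow> g z = C"
        using DERIV_zero_connected_constant[OF conA open_annulus finite.emptyI] by blast
      have "\<forall>z\<in>annulus \<beta>. z + C3 \<noteq> 0 \<and> f z = C + (- 1 / c1 ^ 2) / (z + C3)"
      proof
        fix z assume z: "z \<in> annulus \<beta>"
        have "f z = C - 1 / (c1 ^ 2 * (z + C3))" using C[OF z] by (simp add: g_def algebra_simps)
        also have "\<dots> = C + (- 1 / c1 ^ 2) / (z + C3)" by simp
        finally show "z + C3 \<noteq> 0 \<and> f z = C + (- 1 / c1 ^ 2) / (z + C3)" using zC[OF z] by simp
      qed
      then show ?thesis by blast
    qed
    show "(\<forall>t\<in>{ln \<beta><..<0}. B_fun f t = 0) \<and>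
        ((\<exists>C1 C2. \<forall>z\<in>annulus \<beta>. f z = C1 + C2 * z) \<or>
         (\<exists>C1 C2 C3. \<forall>z\<in>annulus \<beta>. z + C3 \<noteq> 0 \<and> f z = C1 + C2 / (z + C3)))"
      using Bzero concl by blast
  qed
  show ?thesis using part1 part2 by blast
qed

end
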